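(* Let $\mathcal{R}=(\mathcal{X},(\mathcal{M},\mathcal{I}))$ be a reflexive graph category with isomorphisms that has terminal objects stable under face maps and degeneracies. Then for each natural number $n$, the category $\mathcal{M}^n\to\mathcal{M}$ has a terminal object.
   Context: Fix a locally small category $\mathcal{C}$ with finite products; all categories, functors and natural transformations below are internal to $\mathcal{C}$ (objects of objects $C_0$, of morphisms $C_1$, source/target $\mathsf{s}_C,\mathsf{t}_C$, identities $\mathsf{id}_C$, composition $\circ_C$ on generalized morphisms $J\to C_1$, object/morphism parts $F_0,F_1$ of functors). A reflexive graph category $\mathcal{X}$ consists of internal categories $\mathcal{X}(0),\mathcal{X}(1)$, two distinct internal functors $\mathcal{X}(\mathbf{f}_\top),\mathcal{X}(\mathbf{f}_\bot):\mathcal{X}(1)\to\mathcal{X}(0)$ (face maps) and an internal functor $\mathcal{X}(\mathbf{d}):\mathcal{X}(0)\to\mathcal{X}(1)$ (degeneracy) with $\mathcal{X}(\mathbf{f}_\star)\circ\mathcal{X}(\mathbf{d})=\mathsf{id}$; $\mathcal{X}^n$ is the componentwise product. A reflexive graph functor $\mathcal{F}:\mathcal{X}\to\mathcal{Y}$ is a pair of internal functors $\mathcal{F}(l):\mathcal{X}(l)\to\mathcal{Y}(l)$; face map-preserving: $\mathcal{Y}(\mathbf{f}_\star)\circ\mathcal{F}(1)=\mathcal{F}(0)\circ\mathcal{X}(\mathbf{f}_\star)$; degeneracy-preserving: equipped with an internal natural isomorphism $\varepsilon_\mathcal{F}:\mathcal{Y}(\mathbf{d})\circ\mathcal{F}(0)\to\mathcal{F}(1)\circ\mathcal{X}(\mathbf{d})$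 with $\mathcal{Y}(\mathbf{f}_\star)_1\circ\varepsilon_\mathcal{F}=\mathsf{id}_{\mathcal{Y}(0)}\circ\mathcal{F}(0)_0$. Reflexive graph natural transformations $\eta:\mathcal{F}\to\mathcal{G}$: pairs of internal natural transformations $\eta(l):\mathcal{F}(l)\to\mathcal{G}(l)$; face map-preserving: $\mathcal{Y}(\mathbf{f}_\star)_1\circ\eta(1)=\eta(0)\circ\mathcal{X}(\mathbf{f}_\star)_0$; degeneracy-preserving: $(\eta(1)\circ\mathcal{X}(\mathbf{d})_0)\circ_{\mathcal{Y}(1)}\varepsilon_\mathcal{F}=\varepsilon_\mathcal{G}\circ_{\mathcal{Y}(1)}(\mathcal{Y}(\mathbf{d})_1\circ\eta(0))$. Composition $(\mathcal{G}\circ\mathcal{F})(l)=\mathcal{G}(l)\circ\mathcal{F}(l)$, $\varepsilon_{\mathcal{G}\circ\mathcal{F}}=(\mathcal{G}(1)_1\circ\varepsilon_\mathcal{F})\circ(\varepsilon_\mathcal{G}\circ\mathcal{F}(0)_0)$. A reflexive graph category with isomorphisms $\mathcal{R}=(\mathcal{X},(\mathcal{M},\mathcal{I}))$: reflexive graph categories $\mathcal{X},\mathcal{M}$ and a reflexive graph functor $\mathcal{I}:\mathcal{M}\to\mathcal{X}$ with $\mathcal{I}(l)_0$ iso, $\mathcal{I}(l)_1$ monic, $\mathcal{I}(0)\circ\mathcal{M}(\mathbf{f}_\star)=\mathcal{X}(\mathbf{f}_\star)\circ\mathcal{I}(1)$, $\mathcal{I}(1)\circ\mathcal{M}(\mathbf{d})=\mathcal{X}(\mathbf{d})\circ\mathcal{I}(0)$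 (so $\varepsilon_\mathcal{I}$ is an identity), and every morphism of $\mathcal{M}(l)$ an isomorphism; $\mathcal{M}(l)$ is regarded as a wide subcategory of $\mathcal{X}(l)$ and a morphism of $\mathcal{X}(l)$ "lies in $\mathcal{M}(l)$" if it is in the image of $\mathcal{I}(l)_1$. The category $\mathcal{M}^n\to\mathcal{M}$ has as objects the face map- and degeneracy-preserving reflexive graph functors $\mathcal{M}^n\to\mathcal{M}$ and as morphisms $\mathcal{F}\to\mathcal{G}$ the face map- and degeneracy-preserving reflexive graph natural transformations $\mathcal{I}\circ\mathcal{F}\to\mathcal{I}\circ\mathcal{G}$, with componentwise identities and composition. An internal category $C$ has a terminal object if it is equipped with $1_C:1\to C_0$ such that for every generalized object $a:J\to C_0$ there is a unique $!_C(a):J\to C_1$ with source $a$ and target $1_C\circ !_J$. $\mathcal{R}$ has terminal objects stable under face maps and degeneracies if $\mathcal{X}(0)$ and $\mathcal{X}(1)$ have terminal objects, $\mathcal{X}(\mathbf{f}_\star)_0\circ 1_{\mathcal{X}(1)}=1_{\mathcal{X}(0)}$ for both $\star$ (the canonical comparison morphism being the identity), and the canonical morphism $\eta^1_\mathcal{X}:\mathcal{X}(\mathbf{d})_0\circ 1_{\mathcal{X}(0)}\to 1_{\mathcal{X}(1)}$ in $\mathcal{X}(1)$ is an isomorphism lying in $\mathcal{M}(1)$. *)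

theory Defs
  imports Main
begin

record ('o,'m) cat =
  obj  :: "'o set"
  arr  :: "'m set"
  dm   :: "'m \<Rightarrow> 'o"
  cd   :: "'m \<Rightarrow> 'o"
  idt  :: "'o \<Rightarrow> 'm"
  cmp  :: "'m \<Rightarrow> 'm \<Rightarrow> 'm"   (* cmp C g f = g \<circ> f *)

record ('o,'m) pcat = "('o,'m) cat" +
  tm     :: "'o"
  bng    :: "'o \<Rightarrow> 'm"
  pr     :: "'o \<Rightarrow> 'o \<Rightarrow> 'o"
  pj1    :: "'o \<Rightarrow> 'o \<Rightarrow> 'm"
  pj2    :: "'o \<Rightarrow> 'o \<Rightarrow> 'm"
  prpair :: "'m \<Rightarrow> 'm \<Rightarrow> 'm"

definition hom :: "('o,'m) pcat \<Rightarrow> 'o \<Rightarrow> 'o \<Rightarrow> 'm set" where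
  "hom C a b = {f \<in> arr C. dm C f = a \<and> cd C f = b}"

definition category :: "('o,'m) pcat \<Rightarrow> bool" where
  "category C \<longleftrightarrow>
     (\<forall>f\<in>arr C. dm C f \<in> obj C \<and> cd C f \<in> obj C) \<and>
     (\<forall>a\<in>obj C. idt C a \<in> hom C a a) \<and>
     (\<forall>f\<in>arr C. \<forall>g\<in>arr C. cd C f = dm C g \<longrightarrow> cmp C g f \<in> hom C (dm C f) (cd C g)) \<and>
     (\<forall>f\<in>arr C. cmp C f (idt C (dm C f)) = f \<and> cmp C (idt C (cd C f)) f = f) \<and>
     (\<forall>f\<in>arr C. \<forall>g\<in>arr C. \<forall>h\<in>arr C. cd C f = dm C g \<longrightarrow> cd C g = dm C h \<longrightarrow>
        cmp C h (cmp C g f) = cmp C (cmp C h g) f)"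

definition finite_products :: "('o,'m) pcat \<Rightarrow> bool" where
  "finite_products C \<longleftrightarrow>
     tm C \<in> obj C \<and>
     (\<forall>a\<in>obj C. bng C a \<in> hom C a (tm C) \<and> (\<forall>f\<in>hom C a (tm C). f = bng C a)) \<and>
     (\<forall>a\<in>obj C. \<forall>b\<in>obj C.
        pr C a b \<in> obj C \<and> pj1 C a b \<in> hom C (pr C a b) a \<and> pj2 C a b \<in> hom C (pr C a b) b \<and>
        (\<forall>J\<in>obj C. \<forall>f\<in>hom C J a. \<forall>g\<in>hom C J b.
           prpair C f g \<in> hom C J (pr C a b) \<and>
           cmp C (pj1 C a b) (prpair C f g) = f \<and> cmp C (pj2 C a b) (prpair C f g) = g \<and>
           (\<forall>h\<in>hom C J (pr C a b). cmp C (pj1 C a b) h = f \<and> cmp C (pj2 C a b) h = g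
               \<longrightarrow> h = prpair C f g)))"

definition iso_in :: "('o,'m) pcat \<Rightarrow> 'm \<Rightarrow> bool" where
  "iso_in C f \<longleftrightarrow> f \<in> arr C \<and> (\<exists>g\<in>hom C (cd C f) (dm C f).
     cmp C g f = idt C (dm C f) \<and> cmp C f g = idt C (cd C f))"

definition mono_in :: "('o,'m) pcat \<Rightarrow> 'm \<Rightarrow> bool" where
  "mono_in C f \<longleftrightarrow> f \<in> arr C \<and> (\<forall>J\<in>obj C. \<forall>g\<in>hom C J (dm C f). \<forall>h\<in>hom C J (dm C f).
     cmp C f g = cmp C f h \<longrightarrow> g = h)"

(* composition on generalized morphisms: icmp A f g = f \<circ> g  (g first) *)
record ('o,'m) icat =
  C0   :: "'o"
  C1   :: "'o"
  src  :: "'m"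
  tgt  :: "'m"
  iid  :: "'m"
  icmp :: "'m \<Rightarrow> 'm \<Rightarrow> 'm"

definition composable :: "('o,'m) pcat \<Rightarrow> ('o,'m) icat \<Rightarrow> 'o \<Rightarrow> 'm \<Rightarrow> 'm \<Rightarrow> bool" where
  "composable C A J f g \<longleftrightarrow> f \<in> hom C J (C1 A) \<and> g \<in> hom C J (C1 A) \<and>
     cmp C (src A) f = cmp C (tgt A) g"

definition internal_cat :: "('o,'m) pcat \<Rightarrow> ('o,'m) icat \<Rightarrow> bool" where
  "internal_cat C A \<longleftrightarrow>
     C0 A \<in> obj C \<and> C1 A \<in> obj C \<and>
     src A \<in> hom C (C1 A) (C0 A) \<and> tgt A \<in> hom C (C1 A) (C0 A) \<and> iid A \<in> hom C (C0 A) (C1 A) \<and>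
     cmp C (src A) (iid A) = idt C (C0 A) \<and> cmp C (tgt A) (iid A) = idt C (C0 A) \<and>
     (\<forall>J\<in>obj C. \<forall>f g. composable C A J f g \<longrightarrow>
        icmp A f g \<in> hom C J (C1 A) \<and>
        cmp C (src A) (icmp A f g) = cmp C (src A) g \<and>
        cmp C (tgt A) (icmp A f g) = cmp C (tgt A) f \<and>
        (\<forall>K\<in>obj C. \<forall>h\<in>hom C K J. cmp C (icmp A f g) h = icmp A (cmp C f h) (cmp C g h))) \<and>
     (\<forall>J\<in>obj C. \<forall>f\<in>hom C J (C1 A).
        icmp A f (cmp C (iid A) (cmp C (src A) f)) = f \<and>
        icmp A (cmp C (iid A) (cmp C (tgt A) f)) f = f) \<and>
     (\<forall>J\<in>obj C. \<forall>f g h. composable C A J f g \<longrightarrow> composable C A J g h \<longrightarrow>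
        icmp A (icmp A f g) h = icmp A f (icmp A g h))"

record 'm ifun =
  fo :: "'m"
  fa :: "'m"

definition internal_functor :: "('o,'m) pcat \<Rightarrow> ('o,'m) icat \<Rightarrow> ('o,'m) icat \<Rightarrow> 'm ifun \<Rightarrow> bool" where
  "internal_functor C A B F \<longleftrightarrow>
     fo F \<in> hom C (C0 A) (C0 B) \<and> fa F \<in> hom C (C1 A) (C1 B) \<and>
     cmp C (src B) (fa F) = cmp C (fo F) (src A) \<and>
     cmp C (tgt B) (fa F) = cmp C (fo F) (tgt A) \<and>
     cmp C (fa F) (iid A) = cmp C (iid B) (fo F) \<and>
     (\<forall>J\<in>obj C. \<forall>f g. composable C A J f g \<longrightarrow>
        cmp C (fa F) (icmp A f g) = icmp B (cmp C (fa F) f) (cmp C (fa F) g))"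

definition fcomp :: "('o,'m) pcat \<Rightarrow> 'm ifun \<Rightarrow> 'm ifun \<Rightarrow> 'm ifun" where
  "fcomp C G F = \<lparr>fo = cmp C (fo G) (fo F), fa = cmp C (fa G) (fa F)\<rparr>"

definition fid :: "('o,'m) pcat \<Rightarrow> ('o,'m) icat \<Rightarrow> 'm ifun" where
  "fid C A = \<lparr>fo = idt C (C0 A), fa = idt C (C1 A)\<rparr>"

definition internal_nat :: "('o,'m) pcat \<Rightarrow> ('o,'m) icat \<Rightarrow> ('o,'m) icat \<Rightarrow> 'm ifun \<Rightarrow> 'm ifun \<Rightarrow> 'm \<Rightarrow> bool" where
  "internal_nat C A B F G \<eta> \<longleftrightarrow>
     \<eta> \<in> hom C (C0 A) (C1 B) \<and> cmp C (src B) \<eta> = fo F \<and> cmp C (tgt B) \<eta> = fo G \<and>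
     (\<forall>J\<in>obj C. \<forall>f\<in>hom C J (C1 A).
        icmp B (cmp C \<eta> (cmp C (tgt A) f)) (cmp C (fa F) f) =
        icmp B (cmp C (fa G) f) (cmp C \<eta> (cmp C (src A) f)))"

definition internal_nat_iso :: "('o,'m) pcat \<Rightarrow> ('o,'m) icat \<Rightarrow> ('o,'m) icat \<Rightarrow> 'm ifun \<Rightarrow> 'm ifun \<Rightarrow> 'm \<Rightarrow> bool" where
  "internal_nat_iso C A B F G \<eta> \<longleftrightarrow> internal_nat C A B F G \<eta> \<and>
     (\<exists>\<theta>. internal_nat C A B G F \<theta> \<and>
        icmp B \<theta> \<eta> = cmp C (iid B) (fo F) \<and> icmp B \<eta> \<theta> = cmp C (iid B) (fo G))"

definition igroupoid :: "('o,'m) pcat \<Rightarrow> ('o,'m) icat \<Rightarrow> bool" where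
  "igroupoid C A \<longleftrightarrow> (\<forall>J\<in>obj C. \<forall>f\<in>hom C J (C1 A). \<exists>g\<in>hom C J (C1 A).
     cmp C (src A) g = cmp C (tgt A) f \<and> cmp C (tgt A) g = cmp C (src A) f \<and>
     icmp A g f = cmp C (iid A) (cmp C (src A) f) \<and> icmp A f g = cmp C (iid A) (cmp C (tgt A) f))"

definition iiso :: "('o,'m) pcat \<Rightarrow> ('o,'m) icat \<Rightarrow> 'm \<Rightarrow> bool" where
  "iiso C A e \<longleftrightarrow> e \<in> hom C (dm C e) (C1 A) \<and> (\<exists>g\<in>hom C (dm C e) (C1 A).
     cmp C (src A) g = cmp C (tgt A) e \<and> cmp C (tgt A) g = cmp C (src A) e \<and>
     icmp A g e = cmp C (iid A) (cmp C (src A) e) \<and> icmp A e g = cmp C (iid A) (cmp C (tgt A) e))"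

definition iprod :: "('o,'m) pcat \<Rightarrow> ('o,'m) icat \<Rightarrow> ('o,'m) icat \<Rightarrow> ('o,'m) icat" where
  "iprod C A B = \<lparr>C0 = pr C (C0 A) (C0 B), C1 = pr C (C1 A) (C1 B),
     src = prpair C (cmp C (src A) (pj1 C (C1 A) (C1 B))) (cmp C (src B) (pj2 C (C1 A) (C1 B))),
     tgt = prpair C (cmp C (tgt A) (pj1 C (C1 A) (C1 B))) (cmp C (tgt B) (pj2 C (C1 A) (C1 B))),
     iid = prpair C (cmp C (iid A) (pj1 C (C0 A) (C0 B))) (cmp C (iid B) (pj2 C (C0 A) (C0 B))),
     icmp = (\<lambda>f g. prpair C
        (icmp A (cmp C (pj1 C (C1 A) (C1 B)) f) (cmp C (pj1 C (C1 A) (C1 B)) g))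
        (icmp B (cmp C (pj2 C (C1 A) (C1 B)) f) (cmp C (pj2 C (C1 A) (C1 B)) g)))\<rparr>"

definition iterm :: "('o,'m) pcat \<Rightarrow> ('o,'m) icat" where
  "iterm C = \<lparr>C0 = tm C, C1 = tm C, src = idt C (tm C), tgt = idt C (tm C), iid = idt C (tm C),
     icmp = (\<lambda>f g. bng C (dm C f))\<rparr>"

primrec ipow :: "('o,'m) pcat \<Rightarrow> nat \<Rightarrow> ('o,'m) icat \<Rightarrow> ('o,'m) icat" where
  "ipow C 0 A = iterm C"
| "ipow C (Suc n) A = iprod C (ipow C n A) A"

definition fprod :: "('o,'m) pcat \<Rightarrow> ('o,'m) icat \<Rightarrow> ('o,'m) icat \<Rightarrow> 'm ifun \<Rightarrow> 'm ifun \<Rightarrow> 'm ifun" where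
  "fprod C A B F G = \<lparr>fo = prpair C (cmp C (fo F) (pj1 C (C0 A) (C0 B))) (cmp C (fo G) (pj2 C (C0 A) (C0 B))),
     fa = prpair C (cmp C (fa F) (pj1 C (C1 A) (C1 B))) (cmp C (fa G) (pj2 C (C1 A) (C1 B)))\<rparr>"

primrec fpow :: "('o,'m) pcat \<Rightarrow> nat \<Rightarrow> ('o,'m) icat \<Rightarrow> 'm ifun \<Rightarrow> 'm ifun" where
  "fpow C 0 A F = fid C (iterm C)"
| "fpow C (Suc n) A F = fprod C (ipow C n A) A (fpow C n A F) F"

record ('o,'m) rgc =
  X0 :: "('o,'m) icat"
  X1 :: "('o,'m) icat"
  fT :: "'m ifun"
  fB :: "'m ifun"
  dg :: "'m ifun"

definition reflexive_graph_cat :: "('o,'m) pcat \<Rightarrow> ('o,'m) rgc \<Rightarrow> bool" where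
  "reflexive_graph_cat C X \<longleftrightarrow>
     internal_cat C (X0 X) \<and> internal_cat C (X1 X) \<and>
     internal_functor C (X1 X) (X0 X) (fT X) \<and> internal_functor C (X1 X) (X0 X) (fB X) \<and>
     fT X \<noteq> fB X \<and>
     internal_functor C (X0 X) (X1 X) (dg X) \<and>
     fcomp C (fT X) (dg X) = fid C (X0 X) \<and> fcomp C (fB X) (dg X) = fid C (X0 X)"

definition rgpow :: "('o,'m) pcat \<Rightarrow> nat \<Rightarrow> ('o,'m) rgc \<Rightarrow> ('o,'m) rgc" where
  "rgpow C n X = \<lparr>X0 = ipow C n (X0 X), X1 = ipow C n (X1 X),
     fT = fpow C n (X1 X) (fT X), fB = fpow C n (X1 X) (fB X), dg = fpow C n (X0 X) (dg X)\<rparr>"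

record 'm rgf =
  F0  :: "'m ifun"
  F1  :: "'m ifun"
  eps :: "'m"

definition rg_functor :: "('o,'m) pcat \<Rightarrow> ('o,'m) rgc \<Rightarrow> ('o,'m) rgc \<Rightarrow> 'm rgf \<Rightarrow> bool" where
  "rg_functor C X Y F \<longleftrightarrow>
     internal_functor C (X0 X) (X0 Y) (F0 F) \<and> internal_functor C (X1 X) (X1 Y) (F1 F)"

definition face_pres :: "('o,'m) pcat \<Rightarrow> ('o,'m) rgc \<Rightarrow> ('o,'m) rgc \<Rightarrow> 'm rgf \<Rightarrow> bool" where
  "face_pres C X Y F \<longleftrightarrow>
     fcomp C (fT Y) (F1 F) = fcomp C (F0 F) (fT X) \<and>
     fcomp C (fB Y) (F1 F) = fcomp C (F0 F) (fB X)"

definition deg_pres :: "('o,'m) pcat \<Rightarrow> ('o,'m) rgc \<Rightarrow> ('o,'m) rgc \<Rightarrow> 'm rgf \<Rightarrow> bool" where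
  "deg_pres C X Y F \<longleftrightarrow>
     internal_nat_iso C (X0 X) (X1 Y) (fcomp C (dg Y) (F0 F)) (fcomp C (F1 F) (dg X)) (eps F) \<and>
     cmp C (fa (fT Y)) (eps F) = cmp C (iid (X0 Y)) (fo (F0 F)) \<and>
     cmp C (fa (fB Y)) (eps F) = cmp C (iid (X0 Y)) (fo (F0 F))"

(* composite G \<circ> F, where Z is the codomain of G *)
definition rgf_comp :: "('o,'m) pcat \<Rightarrow> ('o,'m) rgc \<Rightarrow> 'm rgf \<Rightarrow> 'm rgf \<Rightarrow> 'm rgf" where
  "rgf_comp C Z G F = \<lparr>F0 = fcomp C (F0 G) (F0 F), F1 = fcomp C (F1 G) (F1 F),
     eps = icmp (X1 Z) (cmp C (fa (F1 G)) (eps F)) (cmp C (eps G) (fo (F0 F)))\<rparr>"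

record 'm rgn =
  N0 :: "'m"
  N1 :: "'m"

definition rg_nat :: "('o,'m) pcat \<Rightarrow> ('o,'m) rgc \<Rightarrow> ('o,'m) rgc \<Rightarrow> 'm rgf \<Rightarrow> 'm rgf \<Rightarrow> 'm rgn \<Rightarrow> bool" where
  "rg_nat C X Y F G \<eta> \<longleftrightarrow>
     internal_nat C (X0 X) (X0 Y) (F0 F) (F0 G) (N0 \<eta>) \<and>
     internal_nat C (X1 X) (X1 Y) (F1 F) (F1 G) (N1 \<eta>)"

definition rgn_face_pres :: "('o,'m) pcat \<Rightarrow> ('o,'m) rgc \<Rightarrow> ('o,'m) rgc \<Rightarrow> 'm rgn \<Rightarrow> bool" where
  "rgn_face_pres C X Y \<eta> \<longleftrightarrow>
     cmp C (fa (fT Y)) (N1 \<eta>) = cmp C (N0 \<eta>) (fo (fT X)) \<and>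
     cmp C (fa (fB Y)) (N1 \<eta>) = cmp C (N0 \<eta>) (fo (fB X))"

definition rgn_deg_pres :: "('o,'m) pcat \<Rightarrow> ('o,'m) rgc \<Rightarrow> ('o,'m) rgc \<Rightarrow> 'm rgf \<Rightarrow> 'm rgf \<Rightarrow> 'm rgn \<Rightarrow> bool" where
  "rgn_deg_pres C X Y F G \<eta> \<longleftrightarrow>
     icmp (X1 Y) (cmp C (N1 \<eta>) (fo (dg X))) (eps F) =
     icmp (X1 Y) (eps G) (cmp C (fa (dg Y)) (N0 \<eta>))"

definition rgc_iso :: "('o,'m) pcat \<Rightarrow> ('o,'m) rgc \<Rightarrow> ('o,'m) rgc \<Rightarrow> 'm rgf \<Rightarrow> bool" where
  "rgc_iso C X M I \<longleftrightarrow>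
     reflexive_graph_cat C X \<and> reflexive_graph_cat C M \<and> rg_functor C M X I \<and>
     iso_in C (fo (F0 I)) \<and> iso_in C (fo (F1 I)) \<and>
     mono_in C (fa (F0 I)) \<and> mono_in C (fa (F1 I)) \<and>
     fcomp C (F0 I) (fT M) = fcomp C (fT X) (F1 I) \<and>
     fcomp C (F0 I) (fB M) = fcomp C (fB X) (F1 I) \<and>
     fcomp C (F1 I) (dg M) = fcomp C (dg X) (F0 I) \<and>
     eps I = cmp C (iid (X1 X)) (cmp C (fo (dg X)) (fo (F0 I))) \<and>
     deg_pres C M X I \<and>
     igroupoid C (X0 M) \<and> igroupoid C (X1 M)"

definition iterminal :: "('o,'m) pcat \<Rightarrow> ('o,'m) icat \<Rightarrow> 'm \<Rightarrow> bool" where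
  "iterminal C A t \<longleftrightarrow> t \<in> hom C (tm C) (C0 A) \<and>
     (\<forall>J\<in>obj C. \<forall>a\<in>hom C J (C0 A). \<exists>!m. m \<in> hom C J (C1 A) \<and>
        cmp C (src A) m = a \<and> cmp C (tgt A) m = cmp C t (bng C J))"

definition ibang :: "('o,'m) pcat \<Rightarrow> ('o,'m) icat \<Rightarrow> 'm \<Rightarrow> 'm \<Rightarrow> 'm" where
  "ibang C A t a = (THE m. m \<in> hom C (dm C a) (C1 A) \<and>
        cmp C (src A) m = a \<and> cmp C (tgt A) m = cmp C t (bng C (dm C a)))"

definition terminal_stable :: "('o,'m) pcat \<Rightarrow> ('o,'m) rgc \<Rightarrow> ('o,'m) rgc \<Rightarrow> 'm rgf \<Rightarrow> bool" where
  "terminal_stable C X M I \<longleftrightarrow> (\<exists>t0 t1.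
     iterminal C (X0 X) t0 \<and> iterminal C (X1 X) t1 \<and>
     cmp C (fo (fT X)) t1 = t0 \<and> cmp C (fo (fB X)) t1 = t0 \<and>
     ibang C (X0 X) t0 (cmp C (fo (fT X)) t1) = cmp C (iid (X0 X)) t0 \<and>
     ibang C (X0 X) t0 (cmp C (fo (fB X)) t1) = cmp C (iid (X0 X)) t0 \<and>
     iiso C (X1 X) (ibang C (X1 X) t1 (cmp C (fo (dg X)) t0)) \<and>
     (\<exists>m\<in>hom C (tm C) (C1 (X1 M)). cmp C (fa (F1 I)) m = ibang C (X1 X) t1 (cmp C (fo (dg X)) t0)))"

definition MnM_obj :: "('o,'m) pcat \<Rightarrow> ('o,'m) rgc \<Rightarrow> nat \<Rightarrow> 'm rgf \<Rightarrow> bool" where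
  "MnM_obj C M n F \<longleftrightarrow> rg_functor C (rgpow C n M) M F \<and>
     face_pres C (rgpow C n M) M F \<and> deg_pres C (rgpow C n M) M F"

definition MnM_hom :: "('o,'m) pcat \<Rightarrow> ('o,'m) rgc \<Rightarrow> ('o,'m) rgc \<Rightarrow> 'm rgf \<Rightarrow> nat \<Rightarrow> 'm rgf \<Rightarrow> 'm rgf \<Rightarrow> 'm rgn \<Rightarrow> bool" where
  "MnM_hom C X M I n F G \<eta> \<longleftrightarrow>
     rg_nat C (rgpow C n M) X (rgf_comp C X I F) (rgf_comp C X I G) \<eta> \<and>
     rgn_face_pres C (rgpow C n M) X \<eta> \<and>
     rgn_deg_pres C (rgpow C n M) X (rgf_comp C X I F) (rgf_comp C X I G) \<eta>"

end

theory Submission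
  imports Defs
begin

lemma hom_iff: "f \<in> hom C a b \<longleftrightarrow> f \<in> arr C \<and> dm C f = a \<and> cd C f = b"
  by (simp add: hom_def)

lemma fo_fcomp[simp]: "fo (fcomp C G F) = cmp C (fo G) (fo F)" by (simp add: fcomp_def)
lemma fa_fcomp[simp]: "fa (fcomp C G F) = cmp C (fa G) (fa F)" by (simp add: fcomp_def)

locale cl =
  fixes C :: "('o,'m) pcat"
  assumes cat: "category C" and fp: "finite_products C"
begin

lemma dm_obj[simp]: "f \<in> arr C \<Longrightarrow> dm C f \<in> obj C"
  using cat unfolding category_def by blast
lemma cd_obj[simp]: "f \<in> arr C \<Longrightarrow> cd C f \<in> obj C"
  using cat unfolding category_def by blast
lemma cmp_hom: "f \<in> arr C \<Longrightarrow> g \<in> arr C \<Longrightarrow> cd C f = dm C g \<Longrightarrow> cmp C g f \<in> hom C (dm C f) (cd C g)"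
  using cat unfolding category_def by blast
lemma cmp_arr[simp]: "f \<in> arr C \<Longrightarrow> g \<in> arr C \<Longrightarrow> cd C f = dm C g \<Longrightarrow> cmp C g f \<in> arr C"
  using cmp_hom by (simp add: hom_iff)
lemma dm_cmp[simp]: "f \<in> arr C \<Longrightarrow> g \<in> arr C \<Longrightarrow> cd C f = dm C g \<Longrightarrow> dm C (cmp C g f) = dm C f"
  using cmp_hom by (simp add: hom_iff)
lemma cd_cmp[simp]: "f \<in> arr C \<Longrightarrow> g \<in> arr C \<Longrightarrow> cd C f = dm C g \<Longrightarrow> cd C (cmp C g f) = cd C g"
  using cmp_hom by (simp add: hom_iff)
lemma assoc[simp]: "f \<in> arr C \<Longrightarrow> g \<in> arr C \<Longrightarrow> h \<in> arr C \<Longrightarrow> cd C f = dm C g \<Longrightarrow> cd C g = dm C h \<Longrightarrow>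
  cmp C (cmp C h g) f = cmp C h (cmp C g f)"
  using cat unfolding category_def by metis
lemma idt_hom: "a \<in> obj C \<Longrightarrow> idt C a \<in> hom C a a"
  using cat unfolding category_def by blast
lemma idt_arr[simp]: "a \<in> obj C \<Longrightarrow> idt C a \<in> arr C"
  and dm_idt[simp]: "a \<in> obj C \<Longrightarrow> dm C (idt C a) = a"
  and cd_idt[simp]: "a \<in> obj C \<Longrightarrow> cd C (idt C a) = a"
  using idt_hom by (auto simp: hom_iff)
lemma idl[simp]: "f \<in> arr C \<Longrightarrow> cd C f = a \<Longrightarrow> cmp C (idt C a) f = f"
  using cat unfolding category_def by blast
lemma idr[simp]: "f \<in> arr C \<Longrightarrow> dm C f = a \<Longrightarrow> cmp C f (idt C a) = f"
  using cat unfolding category_def by blast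

lemma tm_obj[simp]: "tm C \<in> obj C"
  using fp unfolding finite_products_def by blast
lemma bng_arr[simp]: "a \<in> obj C \<Longrightarrow> bng C a \<in> arr C"
  and dm_bng[simp]: "a \<in> obj C \<Longrightarrow> dm C (bng C a) = a"
  and cd_bng[simp]: "a \<in> obj C \<Longrightarrow> cd C (bng C a) = tm C"
  using fp unfolding finite_products_def hom_iff by blast+
lemma bng_uniq: "f \<in> arr C \<Longrightarrow> cd C f = tm C \<Longrightarrow> f = bng C (dm C f)"
proof -
  assume a: "f \<in> arr C" "cd C f = tm C"
  hence "f \<in> hom C (dm C f) (tm C)" by (simp add: hom_iff)
  thus ?thesis using fp dm_obj[OF a(1)] unfolding finite_products_def by blast
qed
lemma bng_cmp[simp]: "f \<in> arr C \<Longrightarrow> cd C f = a \<Longrightarrow> cmp C (bng C a) f = bng C (dm C f)"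
  by (subst bng_uniq[of "cmp C (bng C a) f"]) auto
lemma bng_tm[simp]: "bng C (tm C) = idt C (tm C)"
  using bng_uniq[of "idt C (tm C)"] by simp

lemma pr_obj[simp]: "a \<in> obj C \<Longrightarrow> b \<in> obj C \<Longrightarrow> pr C a b \<in> obj C"
  using fp unfolding finite_products_def by blast
lemma pj1[simp]: "a \<in> obj C \<Longrightarrow> b \<in> obj C \<Longrightarrow> pj1 C a b \<in> arr C"
   "a \<in> obj C \<Longrightarrow> b \<in> obj C \<Longrightarrow> dm C (pj1 C a b) = pr C a b"
   "a \<in> obj C \<Longrightarrow> b \<in> obj C \<Longrightarrow> cd C (pj1 C a b) = a"
  using fp unfolding finite_products_def hom_iff by blast+
lemma pj2[simp]: "a \<in> obj C \<Longrightarrow> b \<in> obj C \<Longrightarrow> pj2 C a b \<in> arr C"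
   "a \<in> obj C \<Longrightarrow> b \<in> obj C \<Longrightarrow> dm C (pj2 C a b) = pr C a b"
   "a \<in> obj C \<Longrightarrow> b \<in> obj C \<Longrightarrow> cd C (pj2 C a b) = b"
  using fp unfolding finite_products_def hom_iff by blast+
lemma prpair_hom: "f \<in> arr C \<Longrightarrow> g \<in> arr C \<Longrightarrow> dm C g = dm C f \<Longrightarrow>
   prpair C f g \<in> hom C (dm C f) (pr C (cd C f) (cd C g)) \<and>
   cmp C (pj1 C (cd C f) (cd C g)) (prpair C f g) = f \<and> cmp C (pj2 C (cd C f) (cd C g)) (prpair C f g) = g"
proof -
  assume a: "f \<in> arr C" "g \<in> arr C" "dm C g = dm C f"
  hence "f \<in> hom C (dm C f) (cd C f)" "g \<in> hom C (dm C f) (cd C g)" by (auto simp add: hom_iff)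
  thus ?thesis using fp dm_obj[OF a(1)] cd_obj[OF a(1)] cd_obj[OF a(2)] unfolding finite_products_def by blast
qed
lemma prpair[simp]: "f \<in> arr C \<Longrightarrow> g \<in> arr C \<Longrightarrow> dm C g = dm C f \<Longrightarrow> prpair C f g \<in> arr C"
  "f \<in> arr C \<Longrightarrow> g \<in> arr C \<Longrightarrow> dm C g = dm C f \<Longrightarrow> dm C (prpair C f g) = dm C f"
  "f \<in> arr C \<Longrightarrow> g \<in> arr C \<Longrightarrow> dm C g = dm C f \<Longrightarrow> cd C (prpair C f g) = pr C (cd C f) (cd C g)"
  using prpair_hom by (auto simp: hom_iff)
lemma pj_prpair[simp]: "f \<in> arr C \<Longrightarrow> g \<in> arr C \<Longrightarrow> dm C g = dm C f \<Longrightarrow> cd C f = a \<Longrightarrow> cd C g = b \<Longrightarrow>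
   cmp C (pj1 C a b) (prpair C f g) = f"
  "f \<in> arr C \<Longrightarrow> g \<in> arr C \<Longrightarrow> dm C g = dm C f \<Longrightarrow> cd C f = a \<Longrightarrow> cd C g = b \<Longrightarrow>
   cmp C (pj2 C a b) (prpair C f g) = g"
  using prpair_hom by auto
lemma pj_prpair_x[simp]: "f \<in> arr C \<Longrightarrow> g \<in> arr C \<Longrightarrow> x \<in> arr C \<Longrightarrow> dm C g = dm C f \<Longrightarrow> cd C x = dm C f \<Longrightarrow> cd C f = a \<Longrightarrow> cd C g = b \<Longrightarrow>
   cmp C (pj1 C a b) (cmp C (prpair C f g) x) = cmp C f x"
  "f \<in> arr C \<Longrightarrow> g \<in> arr C \<Longrightarrow> x \<in> arr C \<Longrightarrow> dm C g = dm C f \<Longrightarrow> cd C x = dm C f \<Longrightarrow> cd C f = a \<Longrightarrow> cd C g = b \<Longrightarrow>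
   cmp C (pj2 C a b) (cmp C (prpair C f g) x) = cmp C g x"
  by (metis assoc prpair pj_prpair pj1 pj2 cd_obj)+

lemma rassoc: "cmp C g f = cmp C g' f' \<Longrightarrow> f \<in> arr C \<Longrightarrow> g \<in> arr C \<Longrightarrow> cd C f = dm C g \<Longrightarrow>
   f' \<in> arr C \<Longrightarrow> g' \<in> arr C \<Longrightarrow> cd C f' = dm C g' \<Longrightarrow> x \<in> arr C \<Longrightarrow> cd C x = dm C f \<Longrightarrow> dm C f' = dm C f \<Longrightarrow>
   cmp C g (cmp C f x) = cmp C g' (cmp C f' x)"
  by (metis assoc)

lemma mono_cancel: "mono_in C f \<Longrightarrow> g \<in> arr C \<Longrightarrow> h \<in> arr C \<Longrightarrow> cd C g = dm C f \<Longrightarrow> cd C h = dm C f \<Longrightarrow>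
   dm C h = dm C g \<Longrightarrow> cmp C f g = cmp C f h \<Longrightarrow> g = h"
proof -
  assume a: "mono_in C f" "g \<in> arr C" "h \<in> arr C" "cd C g = dm C f" "cd C h = dm C f" "dm C h = dm C g" "cmp C f g = cmp C f h"
  hence "g \<in> hom C (dm C g) (dm C f)" "h \<in> hom C (dm C g) (dm C f)" by (auto simp: hom_iff)
  thus ?thesis using a dm_obj[OF a(2)] unfolding mono_in_def by blast
qed

lemma iso_cancel: "iso_in C f \<Longrightarrow> g \<in> arr C \<Longrightarrow> h \<in> arr C \<Longrightarrow> cd C g = dm C f \<Longrightarrow> cd C h = dm C f \<Longrightarrow>
   cmp C f g = cmp C f h \<Longrightarrow> g = h"
proof -
  assume a: "iso_in C f" "g \<in> arr C" "h \<in> arr C" "cd C g = dm C f" "cd C h = dm C f" "cmp C f g = cmp C f h"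
  then obtain k where k: "k \<in> hom C (cd C f) (dm C f)" "cmp C k f = idt C (dm C f)"
    unfolding iso_in_def by blast
  have f: "f \<in> arr C" using a unfolding iso_in_def by blast
  have "g = cmp C (cmp C k f) g" using a k f by simp
  also have "\<dots> = cmp C k (cmp C f g)" using a k f by (intro assoc) (auto simp add: hom_iff)
  also have "\<dots> = cmp C k (cmp C f h)" using a by simp
  also have "\<dots> = cmp C (cmp C k f) h" using a k f by (intro assoc[symmetric]) (auto simp add: hom_iff)
  also have "\<dots> = h" using a k f by simp
  finally show ?thesis .
qed

lemma iso_surj: "iso_in C f \<Longrightarrow> y \<in> arr C \<Longrightarrow> cd C y = cd C f \<Longrightarrow>
   \<exists>x. x \<in> arr C \<and> dm C x = dm C y \<and> cd C x = dm C f \<and> cmp C f x = y"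
proof -
  assume a: "iso_in C f" "y \<in> arr C" "cd C y = cd C f"
  then obtain k where k: "k \<in> hom C (cd C f) (dm C f)" "cmp C f k = idt C (cd C f)"
    unfolding iso_in_def by blast
  have f: "f \<in> arr C" using a unfolding iso_in_def by blast
  show ?thesis
    apply (rule exI[of _ "cmp C k y"])
    using a k f by (simp add: hom_iff flip: assoc)
qed

end

definition lite :: "('o,'m) pcat \<Rightarrow> ('o,'m) icat \<Rightarrow> bool" where
  "lite C A \<longleftrightarrow> C0 A \<in> obj C \<and> C1 A \<in> obj C \<and> src A \<in> hom C (C1 A) (C0 A) \<and>
     tgt A \<in> hom C (C1 A) (C0 A) \<and> iid A \<in> hom C (C0 A) (C1 A) \<and>
     (\<forall>J\<in>obj C. \<forall>f g. composable C A J f g \<longrightarrow> icmp A f g \<in> hom C J (C1 A))"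

definition fhom :: "('o,'m) pcat \<Rightarrow> ('o,'m) icat \<Rightarrow> ('o,'m) icat \<Rightarrow> 'm ifun \<Rightarrow> bool" where
  "fhom C A B F \<longleftrightarrow> fo F \<in> hom C (C0 A) (C0 B) \<and> fa F \<in> hom C (C1 A) (C1 B)"

context cl begin

lemma lite_simps[simp]: "lite C A \<Longrightarrow> C0 A \<in> obj C" "lite C A \<Longrightarrow> C1 A \<in> obj C"
  "lite C A \<Longrightarrow> src A \<in> arr C" "lite C A \<Longrightarrow> dm C (src A) = C1 A" "lite C A \<Longrightarrow> cd C (src A) = C0 A"
  "lite C A \<Longrightarrow> tgt A \<in> arr C" "lite C A \<Longrightarrow> dm C (tgt A) = C1 A" "lite C A \<Longrightarrow> cd C (tgt A) = C0 A"
  "lite C A \<Longrightarrow> iid A \<in> arr C" "lite C A \<Longrightarrow> dm C (iid A) = C0 A" "lite C A \<Longrightarrow> cd C (iid A) = C1 A"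
  unfolding lite_def hom_iff by auto

lemma lite_icmp: "lite C A \<Longrightarrow> f \<in> arr C \<Longrightarrow> g \<in> arr C \<Longrightarrow> cd C f = C1 A \<Longrightarrow> cd C g = C1 A \<Longrightarrow>
  dm C g = dm C f \<Longrightarrow> cmp C (src A) f = cmp C (tgt A) g \<Longrightarrow> icmp A f g \<in> hom C (dm C f) (C1 A)"
  unfolding lite_def composable_def hom_iff by (metis dm_obj)

lemma ic_lite: "internal_cat C A \<Longrightarrow> lite C A"
  unfolding internal_cat_def lite_def by blast

lemma iterm_lite: "lite C (iterm C)"
  unfolding lite_def iterm_def composable_def by (auto simp: hom_iff)

lemma iprod_lite: "lite C A \<Longrightarrow> lite C B \<Longrightarrow> lite C (iprod C A B)"
proof -
  assume A: "lite C A" and B: "lite C B"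
  let ?p1 = "pj1 C (C1 A) (C1 B)" and ?p2 = "pj2 C (C1 A) (C1 B)"
  let ?q1 = "pj1 C (C0 A) (C0 B)" and ?q2 = "pj2 C (C0 A) (C0 B)"
  have s1: "cmp C ?q1 (src (iprod C A B)) = cmp C (src A) ?p1"
    and s2: "cmp C ?q1 (tgt (iprod C A B)) = cmp C (tgt A) ?p1"
    and s3: "cmp C ?q2 (src (iprod C A B)) = cmp C (src B) ?p2"
    and s4: "cmp C ?q2 (tgt (iprod C A B)) = cmp C (tgt B) ?p2"
    using A B by (simp_all add: iprod_def)
  show ?thesis unfolding lite_def
  proof (intro conjI ballI allI impI)
    fix J f g assume J: "J \<in> obj C" and c: "composable C (iprod C A B) J f g"
    hence f: "f \<in> arr C" "dm C f = J" "cd C f = pr C (C1 A) (C1 B)"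
      and g: "g \<in> arr C" "dm C g = J" "cd C g = pr C (C1 A) (C1 B)"
      and e: "cmp C (src (iprod C A B)) f = cmp C (tgt (iprod C A B)) g"
      unfolding composable_def hom_iff by (auto simp: iprod_def)
    have e1: "cmp C (src A) (cmp C ?p1 f) = cmp C (tgt A) (cmp C ?p1 g)"
    proof -
      have "cmp C (src A) (cmp C ?p1 f) = cmp C (cmp C ?q1 (src (iprod C A B))) f"
        using A B f by (simp add: s1)
      also have "\<dots> = cmp C ?q1 (cmp C (src (iprod C A B)) f)"
        using A B f by (simp add: iprod_def)
      also have "\<dots> = cmp C ?q1 (cmp C (tgt (iprod C A B)) g)" using e by simp
      also have "\<dots> = cmp C (cmp C ?q1 (tgt (iprod C A B))) g"
        using A B g by (simp add: iprod_def)
      also have "\<dots> = cmp C (tgt A) (cmp C ?p1 g)" using A B g by (simp add: s2)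
      finally show ?thesis .
    qed
    have e2: "cmp C (src B) (cmp C ?p2 f) = cmp C (tgt B) (cmp C ?p2 g)"
    proof -
      have "cmp C (src B) (cmp C ?p2 f) = cmp C (cmp C ?q2 (src (iprod C A B))) f"
        using A B f by (simp add: s3)
      also have "\<dots> = cmp C ?q2 (cmp C (src (iprod C A B)) f)"
        using A B f by (simp add: iprod_def)
      also have "\<dots> = cmp C ?q2 (cmp C (tgt (iprod C A B)) g)" using e by simp
      also have "\<dots> = cmp C (cmp C ?q2 (tgt (iprod C A B))) g"
        using A B g by (simp add: iprod_def)
      also have "\<dots> = cmp C (tgt B) (cmp C ?p2 g)" using A B g by (simp add: s4)
      finally show ?thesis .
    qed
    have h1: "icmp A (cmp C ?p1 f) (cmp C ?p1 g) \<in> hom C J (C1 A)"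
      using lite_icmp[OF A, of "cmp C ?p1 f" "cmp C ?p1 g"] A B f g e1 by simp
    have h2: "icmp B (cmp C ?p2 f) (cmp C ?p2 g) \<in> hom C J (C1 B)"
      using lite_icmp[OF B, of "cmp C ?p2 f" "cmp C ?p2 g"] A B f g e2 by simp
    show "icmp (iprod C A B) f g \<in> hom C J (C1 (iprod C A B))"
      using h1 h2 by (simp add: iprod_def hom_iff)
  qed (use A B in \<open>simp_all add: iprod_def hom_iff\<close>)
qed

lemma ipow_lite: "lite C A \<Longrightarrow> lite C (ipow C n A)"
  by (induction n) (auto simp: iterm_lite iprod_lite)

lemma fhom_simps[simp]: "fhom C A B F \<Longrightarrow> fo F \<in> arr C" "fhom C A B F \<Longrightarrow> dm C (fo F) = C0 A"
  "fhom C A B F \<Longrightarrow> cd C (fo F) = C0 B"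
  "fhom C A B F \<Longrightarrow> fa F \<in> arr C" "fhom C A B F \<Longrightarrow> dm C (fa F) = C1 A"
  "fhom C A B F \<Longrightarrow> cd C (fa F) = C1 B"
  unfolding fhom_def hom_iff by auto

lemma if_fhom: "internal_functor C A B F \<Longrightarrow> fhom C A B F"
  unfolding internal_functor_def fhom_def by (elim conjE) (intro conjI)

lemma fpow0: "fhom C (ipow C 0 A) (ipow C 0 B) (fpow C 0 A F)"
proof -
  have "fpow C 0 A F = \<lparr>fo = idt C (tm C), fa = idt C (tm C)\<rparr>" by (simp add: fid_def iterm_def)
  moreover have "C0 (ipow C 0 A) = tm C" "C1 (ipow C 0 A) = tm C" "C0 (ipow C 0 B) = tm C" "C1 (ipow C 0 B) = tm C"
    by (simp_all add: iterm_def)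
  ultimately show ?thesis unfolding fhom_def hom_iff by simp
qed
lemma fpow_fhom: "lite C A \<Longrightarrow> lite C B \<Longrightarrow> fhom C A B F \<Longrightarrow> fhom C (ipow C n A) (ipow C n B) (fpow C n A F)"
proof (induction n)
  case 0 show ?case by (rule fpow0)
next
  case (Suc n)
  hence ih: "fhom C (ipow C n A) (ipow C n B) (fpow C n A F)" by blast
  have lA: "lite C (ipow C n A)" and lB: "lite C (ipow C n B)" using Suc.prems ipow_lite by auto
  have F: "fhom C A B F" using Suc.prems by blast
  have a: "fo (fpow C (Suc n) A F) = prpair C (cmp C (fo (fpow C n A F)) (pj1 C (C0 (ipow C n A)) (C0 A)))
     (cmp C (fo F) (pj2 C (C0 (ipow C n A)) (C0 A)))"
    "fa (fpow C (Suc n) A F) = prpair C (cmp C (fa (fpow C n A F)) (pj1 C (C1 (ipow C n A)) (C1 A)))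
     (cmp C (fa F) (pj2 C (C1 (ipow C n A)) (C1 A)))"
    by (simp_all only: fpow.simps fprod_def ifun.simps)
  have b: "C0 (ipow C (Suc n) A) = pr C (C0 (ipow C n A)) (C0 A)" "C1 (ipow C (Suc n) A) = pr C (C1 (ipow C n A)) (C1 A)"
     "C0 (ipow C (Suc n) B) = pr C (C0 (ipow C n B)) (C0 B)" "C1 (ipow C (Suc n) B) = pr C (C1 (ipow C n B)) (C1 B)"
    by (simp_all only: ipow.simps iprod_def icat.simps)
  have lA': "lite C A" "lite C B" using Suc.prems by auto
  have c: "C0 (ipow C n A) \<in> obj C" "C0 A \<in> obj C" "C1 (ipow C n A) \<in> obj C" "C1 A \<in> obj C"
    using lA lA' by auto
  have d: "fo (fpow C n A F) \<in> arr C" "dm C (fo (fpow C n A F)) = C0 (ipow C n A)" "cd C (fo (fpow C n A F)) = C0 (ipow C n B)"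
     "fa (fpow C n A F) \<in> arr C" "dm C (fa (fpow C n A F)) = C1 (ipow C n A)" "cd C (fa (fpow C n A F)) = C1 (ipow C n B)"
     "fo F \<in> arr C" "dm C (fo F) = C0 A" "cd C (fo F) = C0 B" "fa F \<in> arr C" "dm C (fa F) = C1 A" "cd C (fa F) = C1 B"
    using ih F by auto
  show ?case unfolding fhom_def hom_iff a b using c d by simp
qed


lemma ic_comp:
  assumes A: "internal_cat C A" and f: "f \<in> arr C" "cd C f = C1 A" and g: "g \<in> arr C" "cd C g = C1 A" "dm C g = dm C f"
    and e: "cmp C (src A) f = cmp C (tgt A) g"
  shows "icmp A f g \<in> arr C" "dm C (icmp A f g) = dm C f" "cd C (icmp A f g) = C1 A"
    "cmp C (src A) (icmp A f g) = cmp C (src A) g" "cmp C (tgt A) (icmp A f g) = cmp C (tgt A) f"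
    "\<And>h. h \<in> arr C \<Longrightarrow> cd C h = dm C f \<Longrightarrow> cmp C (icmp A f g) h = icmp A (cmp C f h) (cmp C g h)"
proof -
  have c: "composable C A (dm C f) f g" using f g e unfolding composable_def hom_iff by auto
  have J: "dm C f \<in> obj C" using f by simp
  have r: "icmp A f g \<in> hom C (dm C f) (C1 A) \<and>
        cmp C (src A) (icmp A f g) = cmp C (src A) g \<and>
        cmp C (tgt A) (icmp A f g) = cmp C (tgt A) f \<and>
        (\<forall>K\<in>obj C. \<forall>h\<in>hom C K (dm C f). cmp C (icmp A f g) h = icmp A (cmp C f h) (cmp C g h))"
    using A c J unfolding internal_cat_def by blast
  thus "icmp A f g \<in> arr C" "dm C (icmp A f g) = dm C f" "cd C (icmp A f g) = C1 A"
    "cmp C (src A) (icmp A f g) = cmp C (src A) g" "cmp C (tgt A) (icmp A f g) = cmp C (tgt A) f"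
    by (auto simp: hom_iff)
  fix h assume h: "h \<in> arr C" "cd C h = dm C f"
  hence "h \<in> hom C (dm C h) (dm C f)" "dm C h \<in> obj C" by (auto simp: hom_iff)
  thus "cmp C (icmp A f g) h = icmp A (cmp C f h) (cmp C g h)" using r by blast
qed

lemma ic_unit:
  assumes A: "internal_cat C A" and f: "f \<in> arr C" "cd C f = C1 A"
  shows "icmp A f (cmp C (iid A) (cmp C (src A) f)) = f" "icmp A (cmp C (iid A) (cmp C (tgt A) f)) f = f"
proof -
  have "f \<in> hom C (dm C f) (C1 A)" "dm C f \<in> obj C" using f by (auto simp: hom_iff)
  thus "icmp A f (cmp C (iid A) (cmp C (src A) f)) = f" "icmp A (cmp C (iid A) (cmp C (tgt A) f)) f = f"
    using A unfolding internal_cat_def by blast+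
qed

lemma ic_src_iid[simp]: "internal_cat C A \<Longrightarrow> x \<in> arr C \<Longrightarrow> cd C x = C0 A \<Longrightarrow> cmp C (src A) (cmp C (iid A) x) = x"
  "internal_cat C A \<Longrightarrow> x \<in> arr C \<Longrightarrow> cd C x = C0 A \<Longrightarrow> cmp C (tgt A) (cmp C (iid A) x) = x"
proof -
  assume A: "internal_cat C A" and x: "x \<in> arr C" "cd C x = C0 A"
  have l: "lite C A" using A ic_lite by blast
  have e: "cmp C (src A) (iid A) = idt C (C0 A)" "cmp C (tgt A) (iid A) = idt C (C0 A)"
    using A unfolding internal_cat_def by blast+
  show "cmp C (src A) (cmp C (iid A) x) = x" using l x by (simp flip: assoc add: e)
  show "cmp C (tgt A) (cmp C (iid A) x) = x" using l x by (simp flip: assoc add: e)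
qed

lemma term_t: "iterminal C A t \<Longrightarrow> t \<in> arr C" "iterminal C A t \<Longrightarrow> dm C t = tm C"
  "iterminal C A t \<Longrightarrow> cd C t = C0 A"
  unfolding iterminal_def hom_iff by auto

lemma term_uniq:
  assumes t: "iterminal C A t" and l: "lite C A" and m: "m1 \<in> arr C" "m2 \<in> arr C" "cd C m1 = C1 A" "cd C m2 = C1 A"
    "dm C m2 = dm C m1" "cmp C (src A) m2 = cmp C (src A) m1"
    "cmp C (tgt A) m1 = cmp C t (bng C (dm C m1))" "cmp C (tgt A) m2 = cmp C t (bng C (dm C m1))"
  shows "m1 = m2"
proof -
  have a: "cmp C (src A) m1 \<in> hom C (dm C m1) (C0 A)" using l m by (simp add: hom_iff)
  have "\<exists>!m. m \<in> hom C (dm C m1) (C1 A) \<and> cmp C (src A) m = cmp C (src A) m1 \<and> cmp C (tgt A) m = cmp C t (bng C (dm C m1))"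
    using t a m(1) unfolding iterminal_def by simp
  moreover have "m1 \<in> hom C (dm C m1) (C1 A)" "m2 \<in> hom C (dm C m1) (C1 A)" using m by (auto simp: hom_iff)
  ultimately show ?thesis using m by blast
qed

lemma ibang:
  assumes t: "iterminal C A t" and l: "lite C A" and a: "a \<in> arr C" "cd C a = C0 A"
  shows "ibang C A t a \<in> arr C" "dm C (ibang C A t a) = dm C a" "cd C (ibang C A t a) = C1 A"
    "cmp C (src A) (ibang C A t a) = a" "cmp C (tgt A) (ibang C A t a) = cmp C t (bng C (dm C a))"
proof -
  have ah: "a \<in> hom C (dm C a) (C0 A)" using a by (simp add: hom_iff)
  have "\<exists>!m. m \<in> hom C (dm C a) (C1 A) \<and> cmp C (src A) m = a \<and> cmp C (tgt A) m = cmp C t (bng C (dm C a))"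
    using t ah a(1) unfolding iterminal_def by simp
  hence "ibang C A t a \<in> hom C (dm C a) (C1 A) \<and> cmp C (src A) (ibang C A t a) = a \<and> cmp C (tgt A) (ibang C A t a) = cmp C t (bng C (dm C a))"
    unfolding ibang_def by (rule theI')
  thus "ibang C A t a \<in> arr C" "dm C (ibang C A t a) = dm C a" "cd C (ibang C A t a) = C1 A"
    "cmp C (src A) (ibang C A t a) = a" "cmp C (tgt A) (ibang C A t a) = cmp C t (bng C (dm C a))"
    by (auto simp: hom_iff)
qed

lemma if_laws:
  assumes F: "internal_functor C A B F" and A: "lite C A" and B: "lite C B" and x: "x \<in> arr C"
  shows "cd C x = C1 A \<Longrightarrow> cmp C (src B) (cmp C (fa F) x) = cmp C (fo F) (cmp C (src A) x)"
    "cd C x = C1 A \<Longrightarrow> cmp C (tgt B) (cmp C (fa F) x) = cmp C (fo F) (cmp C (tgt A) x)"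
    "cd C x = C0 A \<Longrightarrow> cmp C (fa F) (cmp C (iid A) x) = cmp C (iid B) (cmp C (fo F) x)"
proof -
  have h: "fhom C A B F" using F by (rule if_fhom)
  have e: "cmp C (src B) (fa F) = cmp C (fo F) (src A)" "cmp C (tgt B) (fa F) = cmp C (fo F) (tgt A)"
     "cmp C (fa F) (iid A) = cmp C (iid B) (fo F)"
    using F unfolding internal_functor_def by blast+
  show "cd C x = C1 A \<Longrightarrow> cmp C (src B) (cmp C (fa F) x) = cmp C (fo F) (cmp C (src A) x)"
    by (rule rassoc[OF e(1)]) (use h A B x in auto)
  show "cd C x = C1 A \<Longrightarrow> cmp C (tgt B) (cmp C (fa F) x) = cmp C (fo F) (cmp C (tgt A) x)"
    by (rule rassoc[OF e(2)]) (use h A B x in auto)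
  show "cd C x = C0 A \<Longrightarrow> cmp C (fa F) (cmp C (iid A) x) = cmp C (iid B) (cmp C (fo F) x)"
    by (rule rassoc[OF e(3)]) (use h A B x in auto)
qed

lemma const_functor:
  assumes P: "lite C P" and B: "internal_cat C B" and u: "u \<in> arr C" "dm C u = tm C" "cd C u = C0 B"
  shows "internal_functor C P B \<lparr>fo = cmp C u (bng C (C0 P)), fa = cmp C (iid B) (cmp C u (bng C (C1 P)))\<rparr>"
proof -
  have lB: "lite C B" using B by (rule ic_lite)
  have comp: "cmp C (cmp C (iid B) (cmp C u (bng C (C1 P)))) (icmp P f g) =
      icmp B (cmp C (cmp C (iid B) (cmp C u (bng C (C1 P)))) f) (cmp C (cmp C (iid B) (cmp C u (bng C (C1 P)))) g)"
    if J: "J \<in> obj C" and c: "composable C P J f g" for J f g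
  proof -
    have fg: "f \<in> arr C" "dm C f = J" "cd C f = C1 P" "g \<in> arr C" "dm C g = J" "cd C g = C1 P"
      "cmp C (src P) f = cmp C (tgt P) g"
      using c unfolding composable_def hom_iff by auto
    have ic: "icmp P f g \<in> hom C J (C1 P)" using P J c unfolding lite_def by blast
    let ?k = "cmp C (iid B) (cmp C u (bng C J))"
    have k: "?k \<in> arr C" "cd C ?k = C1 B" using lB u J by auto
    have "cmp C (cmp C (iid B) (cmp C u (bng C (C1 P)))) (icmp P f g) = ?k"
      using ic lB u P by (simp add: hom_iff)
    also have "\<dots> = icmp B ?k (cmp C (iid B) (cmp C (src B) ?k))"
      using ic_unit(1)[OF B k] by simp
    also have "\<dots> = icmp B ?k ?k"
      using lB u J B by simp
    also have "\<dots> = icmp B (cmp C (cmp C (iid B) (cmp C u (bng C (C1 P)))) f) (cmp C (cmp C (iid B) (cmp C u (bng C (C1 P)))) g)"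
      using fg lB u P by simp
    finally show ?thesis .
  qed
  show ?thesis unfolding internal_functor_def
    using lB u P B comp by (simp add: hom_iff)
qed


lemma const_nat:
  assumes P: "lite C P" and B: "internal_cat C B" and k: "k \<in> arr C" "dm C k = tm C" "cd C k = C1 B"
    and F: "fo F = cmp C (src B) (cmp C k (bng C (C0 P)))" and G: "fo G = cmp C (tgt B) (cmp C k (bng C (C0 P)))"
    and Fa: "\<And>f. f \<in> arr C \<Longrightarrow> cd C f = C1 P \<Longrightarrow> cmp C (fa F) f = cmp C (iid B) (cmp C (src B) (cmp C k (bng C (dm C f))))"
    and Ga: "\<And>f. f \<in> arr C \<Longrightarrow> cd C f = C1 P \<Longrightarrow> cmp C (fa G) f = cmp C (iid B) (cmp C (tgt B) (cmp C k (bng C (dm C f))))"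
  shows "internal_nat C P B F G (cmp C k (bng C (C0 P)))"
proof -
  have lB: "lite C B" using B by (rule ic_lite)
  have nat: "icmp B (cmp C (cmp C k (bng C (C0 P))) (cmp C (tgt P) f)) (cmp C (fa F) f) =
        icmp B (cmp C (fa G) f) (cmp C (cmp C k (bng C (C0 P))) (cmp C (src P) f))"
    if f: "f \<in> arr C" "cd C f = C1 P" for f
  proof -
    let ?K = "cmp C k (bng C (dm C f))"
    have K: "?K \<in> arr C" "cd C ?K = C1 B" using k f by auto
    have "icmp B (cmp C (cmp C k (bng C (C0 P))) (cmp C (tgt P) f)) (cmp C (fa F) f) =
          icmp B ?K (cmp C (iid B) (cmp C (src B) ?K))"
      using f k P by (simp add: Fa)
    also have "\<dots> = ?K" using ic_unit(1)[OF B K] .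
    also have "\<dots> = icmp B (cmp C (iid B) (cmp C (tgt B) ?K)) ?K" using ic_unit(2)[OF B K] by simp
    also have "\<dots> = icmp B (cmp C (fa G) f) (cmp C (cmp C k (bng C (C0 P))) (cmp C (src P) f))"
      using f k P by (simp add: Ga)
    finally show ?thesis .
  qed
  show ?thesis unfolding internal_nat_def
    using P lB k nat by (auto simp: hom_iff F G)
qed

lemma fcomp_fo_r: "Defs.fcomp C G F = Defs.fcomp C G' F' \<Longrightarrow> fhom C A B F \<Longrightarrow> fhom C B D G \<Longrightarrow>
  fhom C A B' F' \<Longrightarrow> fhom C B' D G' \<Longrightarrow> x \<in> arr C \<Longrightarrow> cd C x = C0 A \<Longrightarrow>
  cmp C (fo G) (cmp C (fo F) x) = cmp C (fo G') (cmp C (fo F') x)"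
proof -
  assume e: "Defs.fcomp C G F = Defs.fcomp C G' F'" and h: "fhom C A B F" "fhom C B D G" "fhom C A B' F'" "fhom C B' D G'" "x \<in> arr C" "cd C x = C0 A"
  have e1: "cmp C (fo G) (fo F) = cmp C (fo G') (fo F')" using arg_cong[OF e, where f=fo] by simp
  show ?thesis by (rule rassoc[OF e1]) (use h in auto)
qed
lemma fcomp_fa_r: "Defs.fcomp C G F = Defs.fcomp C G' F' \<Longrightarrow> fhom C A B F \<Longrightarrow> fhom C B D G \<Longrightarrow>
  fhom C A B' F' \<Longrightarrow> fhom C B' D G' \<Longrightarrow> x \<in> arr C \<Longrightarrow> cd C x = C1 A \<Longrightarrow>
  cmp C (fa G) (cmp C (fa F) x) = cmp C (fa G') (cmp C (fa F') x)"
proof -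
  assume e: "Defs.fcomp C G F = Defs.fcomp C G' F'" and h: "fhom C A B F" "fhom C B D G" "fhom C A B' F'" "fhom C B' D G'" "x \<in> arr C" "cd C x = C1 A"
  have e1: "cmp C (fa G) (fa F) = cmp C (fa G') (fa F')" using arg_cong[OF e, where f=fa] by simp
  show ?thesis by (rule rassoc[OF e1]) (use h in auto)
qed
lemma fcomp_fid_r: "Defs.fcomp C G F = fid C A \<Longrightarrow> fhom C A B F \<Longrightarrow> fhom C B A G \<Longrightarrow> lite C A \<Longrightarrow>
   x \<in> arr C \<Longrightarrow> (cd C x = C0 A \<longrightarrow> cmp C (fo G) (cmp C (fo F) x) = x) \<and> (cd C x = C1 A \<longrightarrow> cmp C (fa G) (cmp C (fa F) x) = x)"
proof -
  assume e: "Defs.fcomp C G F = fid C A" and h: "fhom C A B F" "fhom C B A G" "lite C A" "x \<in> arr C"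
  have e1: "cmp C (fo G) (fo F) = idt C (C0 A)" "cmp C (fa G) (fa F) = idt C (C1 A)"
    using arg_cong[OF e, where f=fo] arg_cong[OF e, where f=fa] by (simp_all add: fid_def)
  show ?thesis using h by (auto simp flip: assoc simp: e1)
qed


lemma rassoc1: "cmp C g f = h \<Longrightarrow> f \<in> arr C \<Longrightarrow> g \<in> arr C \<Longrightarrow> cd C f = dm C g \<Longrightarrow>
   x \<in> arr C \<Longrightarrow> cd C x = dm C f \<Longrightarrow> cmp C g (cmp C f x) = cmp C h x"
  by (metis assoc)

end

locale ml = cl C for C :: "('o,'m) pcat" +
  fixes X M :: "('o,'m) rgc" and I :: "'m rgf" and t0 t1 m0 :: 'm
  assumes rI: "rgc_iso C X M I"
  and T0: "iterminal C (X0 X) t0" and T1: "iterminal C (X1 X) t1"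
  and ft: "cmp C (fo (fT X)) t1 = t0" and fb: "cmp C (fo (fB X)) t1 = t0"
  and m0h: "m0 \<in> hom C (tm C) (C1 (X1 M))"
  and m0e[simp]: "cmp C (fa (F1 I)) m0 = ibang C (X1 X) t1 (cmp C (fo (dg X)) t0)"
begin

lemma rX: "reflexive_graph_cat C X" and rM: "reflexive_graph_cat C M"
  using rI unfolding rgc_iso_def by blast+

lemma icA0: "internal_cat C (X0 X)" and icA1: "internal_cat C (X1 X)"
  and icB0: "internal_cat C (X0 M)" and icB1: "internal_cat C (X1 M)"
  using rX rM unfolding reflexive_graph_cat_def by blast+

lemma lA0[simp]: "lite C (X0 X)" and lA1[simp]: "lite C (X1 X)" and lB0[simp]: "lite C (X0 M)" and lB1[simp]: "lite C (X1 M)"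
  using icA0 icA1 icB0 icB1 ic_lite by blast+

lemma ifT: "internal_functor C (X1 X) (X0 X) (fT X)" and ifB: "internal_functor C (X1 X) (X0 X) (fB X)"
  and idg: "internal_functor C (X0 X) (X1 X) (dg X)"
  and ifTM: "internal_functor C (X1 M) (X0 M) (fT M)" and ifBM: "internal_functor C (X1 M) (X0 M) (fB M)"
  and idgM: "internal_functor C (X0 M) (X1 M) (dg M)"
  using rX rM unfolding reflexive_graph_cat_def by blast+

lemma iI0: "internal_functor C (X0 M) (X0 X) (F0 I)" and iI1: "internal_functor C (X1 M) (X1 X) (F1 I)"
  using rI unfolding rgc_iso_def rg_functor_def by blast+

lemma hfT: "fhom C (X1 X) (X0 X) (fT X)" and hfB: "fhom C (X1 X) (X0 X) (fB X)"
  and hdg: "fhom C (X0 X) (X1 X) (dg X)"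
  and hfTM: "fhom C (X1 M) (X0 M) (fT M)" and hfBM: "fhom C (X1 M) (X0 M) (fB M)"
  and hdgM: "fhom C (X0 M) (X1 M) (dg M)"
  and hI0: "fhom C (X0 M) (X0 X) (F0 I)" and hI1: "fhom C (X1 M) (X1 X) (F1 I)"
  using ifT ifB idg ifTM ifBM idgM iI0 iI1 if_fhom by blast+

lemmas fsimps[simp] = fhom_simps[OF hfT] fhom_simps[OF hfB] fhom_simps[OF hdg] fhom_simps[OF hfTM]
  fhom_simps[OF hfBM] fhom_simps[OF hdgM] fhom_simps[OF hI0] fhom_simps[OF hI1]

lemmas flaws[simp] = if_laws[OF ifT lA1 lA0] if_laws[OF ifB lA1 lA0] if_laws[OF idg lA0 lA1]
  if_laws[OF ifTM lB1 lB0] if_laws[OF ifBM lB1 lB0] if_laws[OF idgM lB0 lB1]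
  if_laws[OF iI0 lB0 lA0] if_laws[OF iI1 lB1 lA1]

lemma isoI0: "iso_in C (fo (F0 I))" and isoI1: "iso_in C (fo (F1 I))"
  and monoI0: "mono_in C (fa (F0 I))" and monoI1: "mono_in C (fa (F1 I))"
  using rI unfolding rgc_iso_def by blast+

lemma eqs: "Defs.fcomp C (F0 I) (fT M) = Defs.fcomp C (fT X) (F1 I)"
  "Defs.fcomp C (F0 I) (fB M) = Defs.fcomp C (fB X) (F1 I)"
  "Defs.fcomp C (F1 I) (dg M) = Defs.fcomp C (dg X) (F0 I)"
  "eps I = cmp C (iid (X1 X)) (cmp C (fo (dg X)) (fo (F0 I)))"
  "deg_pres C M X I" "igroupoid C (X0 M)" "igroupoid C (X1 M)"
  using rI unfolding rgc_iso_def by blast+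

lemma eqsX: "Defs.fcomp C (fT X) (dg X) = fid C (X0 X)" "Defs.fcomp C (fB X) (dg X) = fid C (X0 X)"
  "Defs.fcomp C (fT M) (dg M) = fid C (X0 M)" "Defs.fcomp C (fB M) (dg M) = fid C (X0 M)"
  using rX rM unfolding reflexive_graph_cat_def by blast+

lemma req[simp]: "x \<in> arr C \<Longrightarrow> cd C x = C0 (X1 M) \<Longrightarrow> cmp C (fo (F0 I)) (cmp C (fo (fT M)) x) = cmp C (fo (fT X)) (cmp C (fo (F1 I)) x)"
  "x \<in> arr C \<Longrightarrow> cd C x = C1 (X1 M) \<Longrightarrow> cmp C (fa (F0 I)) (cmp C (fa (fT M)) x) = cmp C (fa (fT X)) (cmp C (fa (F1 I)) x)"
  "x \<in> arr C \<Longrightarrow> cd C x = C0 (X1 M) \<Longrightarrow> cmp C (fo (F0 I)) (cmp C (fo (fB M)) x) = cmp C (fo (fB X)) (cmp C (fo (F1 I)) x)"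
  "x \<in> arr C \<Longrightarrow> cd C x = C1 (X1 M) \<Longrightarrow> cmp C (fa (F0 I)) (cmp C (fa (fB M)) x) = cmp C (fa (fB X)) (cmp C (fa (F1 I)) x)"
  "x \<in> arr C \<Longrightarrow> cd C x = C0 (X0 M) \<Longrightarrow> cmp C (fo (F1 I)) (cmp C (fo (dg M)) x) = cmp C (fo (dg X)) (cmp C (fo (F0 I)) x)"
  "x \<in> arr C \<Longrightarrow> cd C x = C1 (X0 M) \<Longrightarrow> cmp C (fa (F1 I)) (cmp C (fa (dg M)) x) = cmp C (fa (dg X)) (cmp C (fa (F0 I)) x)"
  using fcomp_fo_r[OF eqs(1) hfTM hI0 hI1 hfT] fcomp_fa_r[OF eqs(1) hfTM hI0 hI1 hfT]
    fcomp_fo_r[OF eqs(2) hfBM hI0 hI1 hfB] fcomp_fa_r[OF eqs(2) hfBM hI0 hI1 hfB]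
    fcomp_fo_r[OF eqs(3) hdgM hI1 hI0 hdg] fcomp_fa_r[OF eqs(3) hdgM hI1 hI0 hdg]
  by auto

lemma reqX[simp]: "x \<in> arr C \<Longrightarrow> cd C x = C0 (X0 X) \<Longrightarrow> cmp C (fo (fT X)) (cmp C (fo (dg X)) x) = x"
  "x \<in> arr C \<Longrightarrow> cd C x = C1 (X0 X) \<Longrightarrow> cmp C (fa (fT X)) (cmp C (fa (dg X)) x) = x"
  "x \<in> arr C \<Longrightarrow> cd C x = C0 (X0 X) \<Longrightarrow> cmp C (fo (fB X)) (cmp C (fo (dg X)) x) = x"
  "x \<in> arr C \<Longrightarrow> cd C x = C1 (X0 X) \<Longrightarrow> cmp C (fa (fB X)) (cmp C (fa (dg X)) x) = x"
  "x \<in> arr C \<Longrightarrow> cd C x = C0 (X0 M) \<Longrightarrow> cmp C (fo (fT M)) (cmp C (fo (dg M)) x) = x"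
  "x \<in> arr C \<Longrightarrow> cd C x = C1 (X0 M) \<Longrightarrow> cmp C (fa (fT M)) (cmp C (fa (dg M)) x) = x"
  "x \<in> arr C \<Longrightarrow> cd C x = C0 (X0 M) \<Longrightarrow> cmp C (fo (fB M)) (cmp C (fo (dg M)) x) = x"
  "x \<in> arr C \<Longrightarrow> cd C x = C1 (X0 M) \<Longrightarrow> cmp C (fa (fB M)) (cmp C (fa (dg M)) x) = x"
  using fcomp_fid_r[OF eqsX(1) hdg hfT lA0] fcomp_fid_r[OF eqsX(2) hdg hfB lA0]
    fcomp_fid_r[OF eqsX(3) hdgM hfTM lB0] fcomp_fid_r[OF eqsX(4) hdgM hfBM lB0]
  by auto

lemmas tfacts[simp] = term_t[OF T0] term_t[OF T1]

lemma m0f[simp]: "m0 \<in> arr C" "dm C m0 = tm C" "cd C m0 = C1 (X1 M)"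
  using m0h by (auto simp: hom_iff)

lemmas bf = ibang[OF T1 lA1, of "cmp C (fo (dg X)) t0"]
lemma bfs[simp]: "ibang C (X1 X) t1 (cmp C (fo (dg X)) t0) \<in> arr C"
  "dm C (ibang C (X1 X) t1 (cmp C (fo (dg X)) t0)) = tm C"
  "cd C (ibang C (X1 X) t1 (cmp C (fo (dg X)) t0)) = C1 (X1 X)"
  "cmp C (src (X1 X)) (ibang C (X1 X) t1 (cmp C (fo (dg X)) t0)) = cmp C (fo (dg X)) t0"
  "cmp C (tgt (X1 X)) (ibang C (X1 X) t1 (cmp C (fo (dg X)) t0)) = t1"
  using bf by auto


lemmas bfs_r[simp] = rassoc1[OF bfs(4)] rassoc1[OF bfs(5)]
lemmas ft_r[simp] = ft rassoc1[OF ft] fb rassoc1[OF fb]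

definition u0 where "u0 = (SOME x. x \<in> arr C \<and> dm C x = tm C \<and> cd C x = C0 (X0 M) \<and> cmp C (fo (F0 I)) x = t0)"

lemma u0: "u0 \<in> arr C \<and> dm C u0 = tm C \<and> cd C u0 = C0 (X0 M) \<and> cmp C (fo (F0 I)) u0 = t0"
proof -
  have "\<exists>x. x \<in> arr C \<and> dm C x = dm C t0 \<and> cd C x = dm C (fo (F0 I)) \<and> cmp C (fo (F0 I)) x = t0"
    by (rule iso_surj[OF isoI0]) auto
  hence "\<exists>x. x \<in> arr C \<and> dm C x = tm C \<and> cd C x = C0 (X0 M) \<and> cmp C (fo (F0 I)) x = t0" by simp
  thus ?thesis unfolding u0_def by (rule someI_ex)
qed

lemma u0f[simp]: "u0 \<in> arr C" "dm C u0 = tm C" "cd C u0 = C0 (X0 M)" "cmp C (fo (F0 I)) u0 = t0"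
  using u0 by auto
lemmas u0f_r[simp] = rassoc1[OF u0f(4)]

definition u1 where "u1 = cmp C (tgt (X1 M)) m0"

lemma u1f[simp]: "u1 \<in> arr C" "dm C u1 = tm C" "cd C u1 = C0 (X1 M)" "cmp C (tgt (X1 M)) m0 = u1"
  unfolding u1_def by auto
lemmas u1f_r[simp] = rassoc1[OF u1f(4)]

lemma srcm0[simp]: "cmp C (src (X1 M)) m0 = cmp C (fo (dg M)) u0"
proof (rule iso_cancel[OF isoI1])
  have "cmp C (fo (F1 I)) (cmp C (src (X1 M)) m0) = cmp C (src (X1 X)) (cmp C (fa (F1 I)) m0)"
    by (simp del: m0e)
  also have "\<dots> = cmp C (fo (dg X)) t0" by simp
  also have "\<dots> = cmp C (fo (F1 I)) (cmp C (fo (dg M)) u0)" by simp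
  finally show "cmp C (fo (F1 I)) (cmp C (src (X1 M)) m0) = cmp C (fo (F1 I)) (cmp C (fo (dg M)) u0)" .
qed auto
lemmas srcm0_r[simp] = rassoc1[OF srcm0]

lemma I1u1[simp]: "cmp C (fo (F1 I)) u1 = t1"
proof -
  have "cmp C (fo (F1 I)) u1 = cmp C (fo (F1 I)) (cmp C (tgt (X1 M)) m0)" by simp
  also have "\<dots> = cmp C (tgt (X1 X)) (cmp C (fa (F1 I)) m0)" by (simp del: u1f m0e)
  also have "\<dots> = t1" by simp
  finally show ?thesis .
qed
lemmas I1u1_r[simp] = rassoc1[OF I1u1]

lemma fTu1[simp]: "cmp C (fo (fT M)) u1 = u0" "cmp C (fo (fB M)) u1 = u0"
  by (rule iso_cancel[OF isoI0]; simp)+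
lemmas fTu1_r[simp] = rassoc1[OF fTu1(1)] rassoc1[OF fTu1(2)]

lemma fTb: "cmp C (fa (fT X)) (ibang C (X1 X) t1 (cmp C (fo (dg X)) t0)) = cmp C (iid (X0 X)) t0"
proof (rule term_uniq[OF T0 lA0])
  show "cmp C (src (X0 X)) (cmp C (iid (X0 X)) t0) = cmp C (src (X0 X)) (cmp C (fa (fT X)) (ibang C (X1 X) t1 (cmp C (fo (dg X)) t0)))"
    by (simp add: icA0)
  show "cmp C (tgt (X0 X)) (cmp C (fa (fT X)) (ibang C (X1 X) t1 (cmp C (fo (dg X)) t0))) =
    cmp C t0 (bng C (dm C (cmp C (fa (fT X)) (ibang C (X1 X) t1 (cmp C (fo (dg X)) t0)))))"
    by (simp add: icA0)
  show "cmp C (tgt (X0 X)) (cmp C (iid (X0 X)) t0) =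
    cmp C t0 (bng C (dm C (cmp C (fa (fT X)) (ibang C (X1 X) t1 (cmp C (fo (dg X)) t0)))))"
    by (simp add: icA0)
qed simp_all

lemma fBb: "cmp C (fa (fB X)) (ibang C (X1 X) t1 (cmp C (fo (dg X)) t0)) = cmp C (iid (X0 X)) t0"
proof (rule term_uniq[OF T0 lA0])
  show "cmp C (src (X0 X)) (cmp C (iid (X0 X)) t0) = cmp C (src (X0 X)) (cmp C (fa (fB X)) (ibang C (X1 X) t1 (cmp C (fo (dg X)) t0)))"
    by (simp add: icA0)
  show "cmp C (tgt (X0 X)) (cmp C (fa (fB X)) (ibang C (X1 X) t1 (cmp C (fo (dg X)) t0))) =
    cmp C t0 (bng C (dm C (cmp C (fa (fB X)) (ibang C (X1 X) t1 (cmp C (fo (dg X)) t0)))))"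
    by (simp add: icA0)
  show "cmp C (tgt (X0 X)) (cmp C (iid (X0 X)) t0) =
    cmp C t0 (bng C (dm C (cmp C (fa (fB X)) (ibang C (X1 X) t1 (cmp C (fo (dg X)) t0)))))"
    by (simp add: icA0)
qed simp_all


lemma fTm0[simp]: "cmp C (fa (fT M)) m0 = cmp C (iid (X0 M)) u0" "cmp C (fa (fB M)) m0 = cmp C (iid (X0 M)) u0"
proof -
  have e: "cmp C (fa (F0 I)) (cmp C (iid (X0 M)) u0) = cmp C (iid (X0 X)) t0" by simp
  show "cmp C (fa (fT M)) m0 = cmp C (iid (X0 M)) u0"
    by (rule mono_cancel[OF monoI0]) (simp_all add: e fTb)
  show "cmp C (fa (fB M)) m0 = cmp C (iid (X0 M)) u0"
    by (rule mono_cancel[OF monoI0]) (simp_all add: e fBb)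
qed
lemmas fTm0_r[simp] = rassoc1[OF fTm0(1)] rassoc1[OF fTm0(2)]


lemma fcomp_eqI: "cmp C (fo G) (fo F) = cmp C (fo G') (fo F') \<Longrightarrow> cmp C (fa G) (fa F) = cmp C (fa G') (fa F') \<Longrightarrow>
  Defs.fcomp C G F = Defs.fcomp C G' F'"
  by (simp add: fcomp_def)

lemma lP[simp]: "lite C (ipow C n (X0 M))" "lite C (ipow C n (X1 M))"
  by (simp_all add: ipow_lite)

lemma hP: "fhom C (ipow C n (X1 M)) (ipow C n (X0 M)) (fpow C n (X1 M) (fT M))"
  "fhom C (ipow C n (X1 M)) (ipow C n (X0 M)) (fpow C n (X1 M) (fB M))"
  "fhom C (ipow C n (X0 M)) (ipow C n (X1 M)) (fpow C n (X0 M) (dg M))"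
  by (simp_all add: fpow_fhom hfTM hfBM hdgM)

lemmas hPs[simp] = fhom_simps[OF hP(1)] fhom_simps[OF hP(2)] fhom_simps[OF hP(3)]

lemma rgp[simp]: "X0 (rgpow C n M) = ipow C n (X0 M)" "X1 (rgpow C n M) = ipow C n (X1 M)"
  "fT (rgpow C n M) = fpow C n (X1 M) (fT M)" "fB (rgpow C n M) = fpow C n (X1 M) (fB M)"
  "dg (rgpow C n M) = fpow C n (X0 M) (dg M)"
  by (simp_all add: rgpow_def)

definition T :: "nat \<Rightarrow> 'm rgf" where
  "T n = \<lparr>F0 = \<lparr>fo = cmp C u0 (bng C (C0 (ipow C n (X0 M)))), fa = cmp C (iid (X0 M)) (cmp C u0 (bng C (C1 (ipow C n (X0 M)))))\<rparr>,
          F1 = \<lparr>fo = cmp C u1 (bng C (C0 (ipow C n (X1 M)))), fa = cmp C (iid (X1 M)) (cmp C u1 (bng C (C1 (ipow C n (X1 M)))))\<rparr>,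
          eps = cmp C m0 (bng C (C0 (ipow C n (X0 M))))\<rparr>"

lemma Tsel[simp]: "F0 (T n) = \<lparr>fo = cmp C u0 (bng C (C0 (ipow C n (X0 M)))), fa = cmp C (iid (X0 M)) (cmp C u0 (bng C (C1 (ipow C n (X0 M)))))\<rparr>"
  "F1 (T n) = \<lparr>fo = cmp C u1 (bng C (C0 (ipow C n (X1 M)))), fa = cmp C (iid (X1 M)) (cmp C u1 (bng C (C1 (ipow C n (X1 M)))))\<rparr>"
  "eps (T n) = cmp C m0 (bng C (C0 (ipow C n (X0 M))))"
  by (simp_all add: T_def)

lemma T_rg: "rg_functor C (rgpow C n M) M (T n)"
  unfolding rg_functor_def rgp Tsel
  by (intro conjI const_functor) (simp_all add: icB0 icB1)

lemma T_face: "face_pres C (rgpow C n M) M (T n)"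
  unfolding face_pres_def rgp Tsel
  by (intro conjI fcomp_eqI) simp_all


lemma T_deg: "deg_pres C (rgpow C n M) M (T n)"
proof -
  let ?P0 = "ipow C n (X0 M)" and ?P1 = "ipow C n (X1 M)"
  let ?F = "Defs.fcomp C (dg M) (F0 (T n))" and ?G = "Defs.fcomp C (F1 (T n)) (fpow C n (X0 M) (dg M))"
  obtain g where g: "g \<in> hom C (tm C) (C1 (X1 M))" "cmp C (src (X1 M)) g = cmp C (tgt (X1 M)) m0"
    "cmp C (tgt (X1 M)) g = cmp C (src (X1 M)) m0"
    "icmp (X1 M) g m0 = cmp C (iid (X1 M)) (cmp C (src (X1 M)) m0)"
    "icmp (X1 M) m0 g = cmp C (iid (X1 M)) (cmp C (tgt (X1 M)) m0)"
    using eqs(7) m0h unfolding igroupoid_def by (meson tm_obj)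
  have gf[simp]: "g \<in> arr C" "dm C g = tm C" "cd C g = C1 (X1 M)" using g(1) by (auto simp: hom_iff)
  have gs[simp]: "cmp C (src (X1 M)) g = u1" "cmp C (tgt (X1 M)) g = cmp C (fo (dg M)) u0"
    using g(2,3) by simp_all
  have gs_r[simp]: "\<And>x. x \<in> arr C \<Longrightarrow> cd C x = tm C \<Longrightarrow> cmp C (src (X1 M)) (cmp C g x) = cmp C u1 x"
    "\<And>x. x \<in> arr C \<Longrightarrow> cd C x = tm C \<Longrightarrow> cmp C (tgt (X1 M)) (cmp C g x) = cmp C (fo (dg M)) (cmp C u0 x)"
    using rassoc1[OF gs(1)] rassoc1[OF gs(2)] by auto
  have n1: "internal_nat C ?P0 (X1 M) ?F ?G (cmp C m0 (bng C (C0 ?P0)))"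
    by (rule const_nat) (simp_all add: icB1)
  have n2: "internal_nat C ?P0 (X1 M) ?G ?F (cmp C g (bng C (C0 ?P0)))"
    by (rule const_nat) (simp_all add: icB1)
  have c1: "icmp (X1 M) (cmp C g (bng C (C0 ?P0))) (cmp C m0 (bng C (C0 ?P0))) = cmp C (iid (X1 M)) (fo ?F)"
  proof -
    have "icmp (X1 M) (cmp C g (bng C (C0 ?P0))) (cmp C m0 (bng C (C0 ?P0))) = cmp C (icmp (X1 M) g m0) (bng C (C0 ?P0))"
      by (rule ic_comp(6)[OF icB1, symmetric]) simp_all
    also have "\<dots> = cmp C (iid (X1 M)) (fo ?F)" using g(4) by simp
    finally show ?thesis .
  qed
  have c2: "icmp (X1 M) (cmp C m0 (bng C (C0 ?P0))) (cmp C g (bng C (C0 ?P0))) = cmp C (iid (X1 M)) (fo ?G)"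
  proof -
    have "icmp (X1 M) (cmp C m0 (bng C (C0 ?P0))) (cmp C g (bng C (C0 ?P0))) = cmp C (icmp (X1 M) m0 g) (bng C (C0 ?P0))"
      by (rule ic_comp(6)[OF icB1, symmetric]) simp_all
    also have "\<dots> = cmp C (iid (X1 M)) (fo ?G)" using g(5) by simp
    finally show ?thesis .
  qed
  have ex: "\<exists>\<theta>. internal_nat C ?P0 (X1 M) ?G ?F \<theta> \<and>
        icmp (X1 M) \<theta> (cmp C m0 (bng C (C0 ?P0))) = cmp C (iid (X1 M)) (fo ?F) \<and>
        icmp (X1 M) (cmp C m0 (bng C (C0 ?P0))) \<theta> = cmp C (iid (X1 M)) (fo ?G)"
    using n2 c1 c2 by blast
  show ?thesis unfolding deg_pres_def internal_nat_iso_def rgp Tsel(3)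
    apply (intro conjI)
       apply (rule n1)
      apply (rule ex)
     apply simp_all
    done
qed

lemma T_obj: "MnM_obj C M n (T n)"
  unfolding MnM_obj_def using T_rg T_face T_deg by blast

end

context cl begin
lemma term_nat:
  assumes A: "internal_cat C A" and t: "iterminal C A t" and P: "lite C P"
    and F: "fhom C P A F" and G: "fhom C P A G"
    and Fs: "\<And>x. x \<in> arr C \<Longrightarrow> cd C x = C1 P \<Longrightarrow> cmp C (src A) (cmp C (fa F) x) = cmp C (fo F) (cmp C (src P) x)"
    and Ft: "\<And>x. x \<in> arr C \<Longrightarrow> cd C x = C1 P \<Longrightarrow> cmp C (tgt A) (cmp C (fa F) x) = cmp C (fo F) (cmp C (tgt P) x)"
    and Gs: "\<And>x. x \<in> arr C \<Longrightarrow> cd C x = C1 P \<Longrightarrow> cmp C (src A) (cmp C (fa G) x) = cmp C (fo G) (cmp C (src P) x)"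
    and Gt: "\<And>x. x \<in> arr C \<Longrightarrow> cd C x = C1 P \<Longrightarrow> cmp C (tgt A) (cmp C (fa G) x) = cmp C (fo G) (cmp C (tgt P) x)"
    and Go: "fo G = cmp C t (bng C (C0 P))"
  shows "internal_nat C P A F G (ibang C A t (fo F))"
proof -
  have lA: "lite C A" using A by (rule ic_lite)
  have tf[simp]: "t \<in> arr C" "dm C t = tm C" "cd C t = C0 A" using term_t[OF t] by auto
  have Ff[simp]: "fo F \<in> arr C" "dm C (fo F) = C0 P" "cd C (fo F) = C0 A" "fa F \<in> arr C" "dm C (fa F) = C1 P" "cd C (fa F) = C1 A"
    using F by auto
  have Gf[simp]: "fa G \<in> arr C" "dm C (fa G) = C1 P" "cd C (fa G) = C1 A"
    using G by auto
  note ib = ibang[OF t lA Ff(1) Ff(3)]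
  have ibf[simp]: "ibang C A t (fo F) \<in> arr C" "dm C (ibang C A t (fo F)) = C0 P" "cd C (ibang C A t (fo F)) = C1 A"
     "cmp C (src A) (ibang C A t (fo F)) = fo F" "cmp C (tgt A) (ibang C A t (fo F)) = cmp C t (bng C (C0 P))"
    using ib by auto
  have ibr[simp]: "\<And>x. x \<in> arr C \<Longrightarrow> cd C x = C0 P \<Longrightarrow> cmp C (src A) (cmp C (ibang C A t (fo F)) x) = cmp C (fo F) x"
    "\<And>x. x \<in> arr C \<Longrightarrow> cd C x = C0 P \<Longrightarrow> cmp C (tgt A) (cmp C (ibang C A t (fo F)) x) = cmp C t (bng C (dm C x))"
    using rassoc1[OF ibf(4)] rassoc1[OF ibf(5)] lA P by auto
  note [simp] = Fs Ft Gs Gt Go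
  let ?e = "ibang C A t (fo F)"
  have nat: "icmp A (cmp C ?e (cmp C (tgt P) f)) (cmp C (fa F) f) = icmp A (cmp C (fa G) f) (cmp C ?e (cmp C (src P) f))"
    if f: "f \<in> arr C" "cd C f = C1 P" for f
  proof -
    note L = ic_comp[OF A, of "cmp C ?e (cmp C (tgt P) f)" "cmp C (fa F) f"]
    note R = ic_comp[OF A, of "cmp C (fa G) f" "cmp C ?e (cmp C (src P) f)"]
    have L1: "icmp A (cmp C ?e (cmp C (tgt P) f)) (cmp C (fa F) f) \<in> arr C"
      "dm C (icmp A (cmp C ?e (cmp C (tgt P) f)) (cmp C (fa F) f)) = dm C f"
      "cd C (icmp A (cmp C ?e (cmp C (tgt P) f)) (cmp C (fa F) f)) = C1 A"
      "cmp C (src A) (icmp A (cmp C ?e (cmp C (tgt P) f)) (cmp C (fa F) f)) = cmp C (fo F) (cmp C (src P) f)"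
      "cmp C (tgt A) (icmp A (cmp C ?e (cmp C (tgt P) f)) (cmp C (fa F) f)) = cmp C t (bng C (dm C f))"
      using L f P by simp_all
    have R1: "icmp A (cmp C (fa G) f) (cmp C ?e (cmp C (src P) f)) \<in> arr C"
      "dm C (icmp A (cmp C (fa G) f) (cmp C ?e (cmp C (src P) f))) = dm C f"
      "cd C (icmp A (cmp C (fa G) f) (cmp C ?e (cmp C (src P) f))) = C1 A"
      "cmp C (src A) (icmp A (cmp C (fa G) f) (cmp C ?e (cmp C (src P) f))) = cmp C (fo F) (cmp C (src P) f)"
      "cmp C (tgt A) (icmp A (cmp C (fa G) f) (cmp C ?e (cmp C (src P) f))) = cmp C t (bng C (dm C f))"
      using R f P by simp_all
    show ?thesis by (rule term_uniq[OF t lA]) (simp_all add: L1 R1)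
  qed
  show ?thesis unfolding internal_nat_def using nat P by (auto simp: hom_iff)
qed
end

context ml begin

lemma eps_comp:
  assumes G: "MnM_obj C M n G"
  shows "eps (rgf_comp C X I G) = cmp C (fa (F1 I)) (eps G)"
proof -
  have G0: "internal_functor C (ipow C n (X0 M)) (X0 M) (F0 G)"
    and en: "internal_nat C (ipow C n (X0 M)) (X1 M) (Defs.fcomp C (dg M) (F0 G)) (Defs.fcomp C (F1 G) (fpow C n (X0 M) (dg M))) (eps G)"
    using G unfolding MnM_obj_def rg_functor_def deg_pres_def internal_nat_iso_def by auto
  have g0[simp]: "fo (F0 G) \<in> arr C" "dm C (fo (F0 G)) = C0 (ipow C n (X0 M))" "cd C (fo (F0 G)) = C0 (X0 M)"
    using if_fhom[OF G0] by auto
  have e[simp]: "eps G \<in> arr C" "dm C (eps G) = C0 (ipow C n (X0 M))" "cd C (eps G) = C1 (X1 M)"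
    "cmp C (src (X1 M)) (eps G) = cmp C (fo (dg M)) (fo (F0 G))"
    using en unfolding internal_nat_def by (auto simp: hom_iff)
  let ?K = "cmp C (fa (F1 I)) (eps G)"
  have K: "?K \<in> arr C" "cd C ?K = C1 (X1 X)" by auto
  have "eps (rgf_comp C X I G) = icmp (X1 X) ?K (cmp C (iid (X1 X)) (cmp C (src (X1 X)) ?K))"
    by (simp add: rgf_comp_def eqs(4) del: flaws) (simp)
  also have "\<dots> = ?K" by (rule ic_unit(1)[OF icA1 K])
  finally show ?thesis .
qed


lemma rgf_sel[simp]: "F0 (rgf_comp C X I G) = Defs.fcomp C (F0 I) (F0 G)" "F1 (rgf_comp C X I G) = Defs.fcomp C (F1 I) (F1 G)"
  by (simp_all add: rgf_comp_def)

context
  fixes n :: nat and F :: "'m rgf"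
  assumes Fo: "MnM_obj C M n F"
begin

lemma F_if: "internal_functor C (ipow C n (X0 M)) (X0 M) (F0 F)" "internal_functor C (ipow C n (X1 M)) (X1 M) (F1 F)"
  using Fo unfolding MnM_obj_def rg_functor_def by auto

lemmas Fsimps[simp] = fhom_simps[OF if_fhom[OF F_if(1)]] fhom_simps[OF if_fhom[OF F_if(2)]]
lemmas Flaws[simp] = if_laws[OF F_if(1) lP(1) lB0] if_laws[OF F_if(2) lP(2) lB1]

lemma Fface: "Defs.fcomp C (fT M) (F1 F) = Defs.fcomp C (F0 F) (fpow C n (X1 M) (fT M))"
  "Defs.fcomp C (fB M) (F1 F) = Defs.fcomp C (F0 F) (fpow C n (X1 M) (fB M))"
  using Fo unfolding MnM_obj_def face_pres_def by auto

lemma Fface_r[simp]: "cmp C (fo (F0 F)) (fo (fpow C n (X1 M) (fT M))) = cmp C (fo (fT M)) (fo (F1 F))"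
  "cmp C (fo (F0 F)) (fo (fpow C n (X1 M) (fB M))) = cmp C (fo (fB M)) (fo (F1 F))"
  "\<And>x. x \<in> arr C \<Longrightarrow> cd C x = C0 (ipow C n (X1 M)) \<Longrightarrow> cmp C (fo (F0 F)) (cmp C (fo (fpow C n (X1 M) (fT M))) x) = cmp C (fo (fT M)) (cmp C (fo (F1 F)) x)"
  "\<And>x. x \<in> arr C \<Longrightarrow> cd C x = C0 (ipow C n (X1 M)) \<Longrightarrow> cmp C (fo (F0 F)) (cmp C (fo (fpow C n (X1 M) (fB M))) x) = cmp C (fo (fB M)) (cmp C (fo (F1 F)) x)"
  using arg_cong[OF Fface(1), where f=fo] arg_cong[OF Fface(2), where f=fo]
    fcomp_fo_r[OF Fface(1) if_fhom[OF F_if(2)] hfTM hP(1) if_fhom[OF F_if(1)]]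
    fcomp_fo_r[OF Fface(2) if_fhom[OF F_if(2)] hfBM hP(2) if_fhom[OF F_if(1)]]
  by auto

lemma Feps: "eps F \<in> arr C" "dm C (eps F) = C0 (ipow C n (X0 M))" "cd C (eps F) = C1 (X1 M)"
    "cmp C (src (X1 M)) (eps F) = cmp C (fo (dg M)) (fo (F0 F))"
    "cmp C (tgt (X1 M)) (eps F) = cmp C (fo (F1 F)) (fo (fpow C n (X0 M) (dg M)))"
  using Fo unfolding MnM_obj_def deg_pres_def internal_nat_iso_def internal_nat_def by (auto simp: hom_iff)
lemmas Feps_s[simp] = Feps rassoc1[OF Feps(4)] rassoc1[OF Feps(5)]

abbreviation "e0 \<equiv> ibang C (X0 X) t0 (cmp C (fo (F0 I)) (fo (F0 F)))"
abbreviation "e1 \<equiv> ibang C (X1 X) t1 (cmp C (fo (F1 I)) (fo (F1 F)))"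

lemma e0f[simp]: "e0 \<in> arr C" "dm C e0 = C0 (ipow C n (X0 M))" "cd C e0 = C1 (X0 X)"
  "cmp C (src (X0 X)) e0 = cmp C (fo (F0 I)) (fo (F0 F))" "cmp C (tgt (X0 X)) e0 = cmp C t0 (bng C (C0 (ipow C n (X0 M))))"
  using ibang[OF T0 lA0, of "cmp C (fo (F0 I)) (fo (F0 F))"] by auto
lemma e1f[simp]: "e1 \<in> arr C" "dm C e1 = C0 (ipow C n (X1 M))" "cd C e1 = C1 (X1 X)"
  "cmp C (src (X1 X)) e1 = cmp C (fo (F1 I)) (fo (F1 F))" "cmp C (tgt (X1 X)) e1 = cmp C t1 (bng C (C0 (ipow C n (X1 M))))"
  using ibang[OF T1 lA1, of "cmp C (fo (F1 I)) (fo (F1 F))"] by auto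
lemmas ef_r[simp] = rassoc1[OF e0f(4)] rassoc1[OF e0f(5)] rassoc1[OF e1f(4)] rassoc1[OF e1f(5)]

lemma nat0: "internal_nat C (ipow C n (X0 M)) (X0 X) (Defs.fcomp C (F0 I) (F0 F)) (Defs.fcomp C (F0 I) (F0 (T n))) e0"
  using term_nat[OF icA0 T0 lP(1)[of n], where F="Defs.fcomp C (F0 I) (F0 F)" and G="Defs.fcomp C (F0 I) (F0 (T n))"]
  by (simp add: fhom_def hom_iff icA0 icA1)

lemma nat1: "internal_nat C (ipow C n (X1 M)) (X1 X) (Defs.fcomp C (F1 I) (F1 F)) (Defs.fcomp C (F1 I) (F1 (T n))) e1"
  using term_nat[OF icA1 T1 lP(2)[of n], where F="Defs.fcomp C (F1 I) (F1 F)" and G="Defs.fcomp C (F1 I) (F1 (T n))"]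
  by (simp add: fhom_def hom_iff icA0 icA1)


lemma face_e: "cmp C (fa (fT X)) e1 = cmp C e0 (fo (fpow C n (X1 M) (fT M)))"
  "cmp C (fa (fB X)) e1 = cmp C e0 (fo (fpow C n (X1 M) (fB M)))"
  by (rule term_uniq[OF T0 lA0]; simp add: icA0)+

lemma deg_e: "icmp (X1 X) (cmp C e1 (fo (fpow C n (X0 M) (dg M)))) (cmp C (fa (F1 I)) (eps F)) =
   icmp (X1 X) (cmp C (fa (F1 I)) (eps (T n))) (cmp C (fa (dg X)) e0)"
proof -
  let ?f1 = "cmp C e1 (fo (fpow C n (X0 M) (dg M)))" and ?g1 = "cmp C (fa (F1 I)) (eps F)"
  let ?f2 = "cmp C (fa (F1 I)) (cmp C m0 (bng C (C0 (ipow C n (X0 M)))))" and ?g2 = "cmp C (fa (dg X)) e0"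
  note L = ic_comp[OF icA1, of ?f1 ?g1]
  note R = ic_comp[OF icA1, of ?f2 ?g2]
  have L1: "icmp (X1 X) ?f1 ?g1 \<in> arr C" "dm C (icmp (X1 X) ?f1 ?g1) = C0 (ipow C n (X0 M))"
    "cd C (icmp (X1 X) ?f1 ?g1) = C1 (X1 X)"
    "cmp C (src (X1 X)) (icmp (X1 X) ?f1 ?g1) = cmp C (fo (dg X)) (cmp C (fo (F0 I)) (fo (F0 F)))"
    "cmp C (tgt (X1 X)) (icmp (X1 X) ?f1 ?g1) = cmp C t1 (bng C (C0 (ipow C n (X0 M))))"
    using L by simp_all
  have Rc: "?f2 \<in> arr C" "?g2 \<in> arr C" "cd C ?f2 = C1 (X1 X)" "cd C ?g2 = C1 (X1 X)" "dm C ?g2 = dm C ?f2"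
     "cmp C (src (X1 X)) ?f2 = cmp C (tgt (X1 X)) ?g2" by simp_all
  have R1: "icmp (X1 X) ?f2 ?g2 \<in> arr C" "dm C (icmp (X1 X) ?f2 ?g2) = C0 (ipow C n (X0 M))"
    "cd C (icmp (X1 X) ?f2 ?g2) = C1 (X1 X)"
    "cmp C (src (X1 X)) (icmp (X1 X) ?f2 ?g2) = cmp C (fo (dg X)) (cmp C (fo (F0 I)) (fo (F0 F)))"
    "cmp C (tgt (X1 X)) (icmp (X1 X) ?f2 ?g2) = cmp C t1 (bng C (C0 (ipow C n (X0 M))))"
    using R[OF Rc(1) Rc(3) Rc(2) Rc(4) Rc(5) Rc(6)] by simp_all
  show ?thesis by (rule term_uniq[OF T1 lA1]) (simp_all add: L1 R1)
qed

lemma hom_ex: "MnM_hom C X M I n F (T n) \<lparr>N0 = e0, N1 = e1\<rparr>"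
  unfolding MnM_hom_def rg_nat_def rgn_face_pres_def rgn_deg_pres_def rgp rgf_sel
    eps_comp[OF Fo] eps_comp[OF T_obj]
  using nat0 nat1 face_e deg_e by simp

lemma hom_uniq: "MnM_hom C X M I n F (T n) \<eta> \<Longrightarrow> \<eta> = \<lparr>N0 = e0, N1 = e1\<rparr>"
proof -
  assume h: "MnM_hom C X M I n F (T n) \<eta>"
  have n0: "internal_nat C (ipow C n (X0 M)) (X0 X) (Defs.fcomp C (F0 I) (F0 F)) (Defs.fcomp C (F0 I) (F0 (T n))) (N0 \<eta>)"
   and n1: "internal_nat C (ipow C n (X1 M)) (X1 X) (Defs.fcomp C (F1 I) (F1 F)) (Defs.fcomp C (F1 I) (F1 (T n))) (N1 \<eta>)"
    using h unfolding MnM_hom_def rg_nat_def by simp_all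
  have a0: "N0 \<eta> \<in> arr C" "dm C (N0 \<eta>) = C0 (ipow C n (X0 M))" "cd C (N0 \<eta>) = C1 (X0 X)"
    "cmp C (src (X0 X)) (N0 \<eta>) = cmp C (fo (F0 I)) (fo (F0 F))"
    "cmp C (tgt (X0 X)) (N0 \<eta>) = cmp C t0 (bng C (C0 (ipow C n (X0 M))))"
    using n0 unfolding internal_nat_def by (auto simp: hom_iff)
  have a1: "N1 \<eta> \<in> arr C" "dm C (N1 \<eta>) = C0 (ipow C n (X1 M))" "cd C (N1 \<eta>) = C1 (X1 X)"
    "cmp C (src (X1 X)) (N1 \<eta>) = cmp C (fo (F1 I)) (fo (F1 F))"
    "cmp C (tgt (X1 X)) (N1 \<eta>) = cmp C t1 (bng C (C0 (ipow C n (X1 M))))"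
    using n1 unfolding internal_nat_def by (auto simp: hom_iff)
  have "N0 \<eta> = e0" by (rule term_uniq[OF T0 lA0]) (simp_all add: a0)
  moreover have "N1 \<eta> = e1" by (rule term_uniq[OF T1 lA1]) (simp_all add: a1)
  ultimately show ?thesis by (cases \<eta>) simp
qed

end

lemma main: "\<exists>T. MnM_obj C M n T \<and> (\<forall>F. MnM_obj C M n F \<longrightarrow> (\<exists>!\<eta>. MnM_hom C X M I n F T \<eta>))"
proof (intro exI conjI allI impI)
  show "MnM_obj C M n (T n)" by (rule T_obj)
  fix F assume Fo: "MnM_obj C M n F"
  show "\<exists>!\<eta>. MnM_hom C X M I n F (T n) \<eta>"
    using hom_ex[OF Fo] hom_uniq[OF Fo] by blast
qed

end

theorem lemma41:
  fixes C :: "('o,'m) pcat" and X M :: "('o,'m) rgc" and I :: "'m rgf" and n :: nat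
  assumes "category C" and "finite_products C"
    and "rgc_iso C X M I"
    and "terminal_stable C X M I"
  shows "\<exists>T. MnM_obj C M n T \<and> (\<forall>F. MnM_obj C M n F \<longrightarrow> (\<exists>!\<eta>. MnM_hom C X M I n F T \<eta>))"
proof -
  obtain t0 t1 m0 where t: "iterminal C (X0 X) t0" "iterminal C (X1 X) t1"
    "cmp C (fo (fT X)) t1 = t0" "cmp C (fo (fB X)) t1 = t0"
    "m0 \<in> hom C (tm C) (C1 (X1 M))"
    "cmp C (fa (F1 I)) m0 = ibang C (X1 X) t1 (cmp C (fo (dg X)) t0)"
    using assms(4) unfolding terminal_stable_def by blast
  have "ml C X M I t0 t1 m0"
    unfolding ml_def ml_axioms_def cl_def using assms t by blast
  thus ?thesis by (rule ml.main)
qed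

end
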